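(* Let $Q$ be a finite quiver with $kQ$ of finite GK-dimension, and let $P$ be a point module over $kQ$. Then there is a cyclic vertex $v$ such that $\pi^*P\cong\pi^*\mathcal O_v$ in $\mathrm{QGr}\,kQ$.
   Context: $kQ$ is the path algebra of a finite quiver over a field $k$, graded by path length. A point module is a graded right module $M=\bigoplus_{i\ge0}M_i$ with $M=M_0\,kQ$ and $\dim_kM_i=1$ for all $i\ge0$. $\mathrm{QGr}\,kQ$ is the quotient of graded modules by torsion modules (modules each of whose elements is annihilated by $(kQ)_{\ge n}$ for some $n$), with quotient functor $\pi^*$. With finite GK-dimension each cyclic vertex $v$ lies on a unique simple cycle $p=(v=v_0,a_1,\dots,a_n,v_n=v)$, and $\mathcal O_v=e_vkQ/\bigoplus p^m a_1\cdots a_i b\,kQ$ (sum over $m\ge0$, $0\le i<n$, arrows $b\neq a_{i+1}$ with source $v_i$). *)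

theory Defs
  imports Main "HOL-Library.Extended_Real" "HOL-Library.Liminf_Limsup"
begin

text \<open>Paths are composed left to right: a path starting at v is
a list of arrows a1 ... an with src a1 = v and tgt ai = src a(i+1).
The empty list at v stands for the trivial path e_v.\<close>

fun pathfrom :: "('e \<Rightarrow> 'v) \<Rightarrow> ('e \<Rightarrow> 'v) \<Rightarrow> 'v \<Rightarrow> 'e list \<Rightarrow> bool" where
  "pathfrom src tgt v [] = True"
| "pathfrom src tgt v (a # q) = (src a = v \<and> pathfrom src tgt (tgt a) q)"

fun endv :: "('e \<Rightarrow> 'v) \<Rightarrow> 'v \<Rightarrow> 'e list \<Rightarrow> 'v" where
  "endv tgt v [] = v"
| "endv tgt v (a # q) = endv tgt (tgt a) q"

text \<open>GK-dimension of kQ: kQ is generated by V = kQ_0 + kQ_1 (which contains 1), and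
V^n = (kQ)_{\<le>n} has the paths of length at most n as a basis.
GKdim kQ = limsup_n log(dim V^n)/log n.\<close>

definition gk_dim :: "('e::finite \<Rightarrow> 'v::finite) \<Rightarrow> ('e \<Rightarrow> 'v) \<Rightarrow> ereal" where
  "gk_dim src tgt = limsup (\<lambda>n::nat. ereal
      (ln (real (card {(v, p). pathfrom src tgt v p \<and> length p \<le> n})) / ln (real n)))"

text \<open>Graded right kQ-modules, given by their k-vector space structure together with the
right actions of the generators e_v (idempotents) and arrows of kQ, and the grading
(mgr i is the homogeneous component M_i).\<close>

record ('k, 'v, 'e, 'm) qmod =
  mcarr :: "'m set"
  mzero :: 'm
  madd :: "'m \<Rightarrow> 'm \<Rightarrow> 'm"
  msmul :: "'k \<Rightarrow> 'm \<Rightarrow> 'm"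
  midem :: "'v \<Rightarrow> 'm \<Rightarrow> 'm"
  marr :: "'e \<Rightarrow> 'm \<Rightarrow> 'm"
  mgr :: "nat \<Rightarrow> 'm set"

definition lsum :: "('k, 'v, 'e, 'm, 'z) qmod_scheme \<Rightarrow> ('b \<Rightarrow> 'm) \<Rightarrow> 'b list \<Rightarrow> 'm" where
  "lsum M f xs = foldr (\<lambda>x acc. madd M (f x) acc) xs (mzero M)"

definition msub :: "('k::field, 'v, 'e, 'm, 'z) qmod_scheme \<Rightarrow> 'm \<Rightarrow> 'm \<Rightarrow> 'm" where
  "msub M x y = madd M x (msmul M (-1) y)"

definition grmod :: "('e::finite \<Rightarrow> 'v::finite) \<Rightarrow> ('e \<Rightarrow> 'v)
    \<Rightarrow> ('k::field, 'v, 'e, 'm, 'z) qmod_scheme \<Rightarrow> bool" where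
  "grmod src tgt M \<longleftrightarrow>
     \<comment> \<open>k-vector space\<close>
     mzero M \<in> mcarr M \<and>
     (\<forall>x\<in>mcarr M. \<forall>y\<in>mcarr M. madd M x y \<in> mcarr M) \<and>
     (\<forall>c. \<forall>x\<in>mcarr M. msmul M c x \<in> mcarr M) \<and>
     (\<forall>x\<in>mcarr M. \<forall>y\<in>mcarr M. \<forall>z\<in>mcarr M. madd M (madd M x y) z = madd M x (madd M y z)) \<and>
     (\<forall>x\<in>mcarr M. \<forall>y\<in>mcarr M. madd M x y = madd M y x) \<and>
     (\<forall>x\<in>mcarr M. madd M (mzero M) x = x) \<and>
     (\<forall>x\<in>mcarr M. madd M x (msmul M (-1) x) = mzero M) \<and>
     (\<forall>c. \<forall>x\<in>mcarr M. \<forall>y\<in>mcarr M. msmul M c (madd M x y) = madd M (msmul M c x) (msmul M c y)) \<and>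
     (\<forall>c d. \<forall>x\<in>mcarr M. msmul M (c + d) x = madd M (msmul M c x) (msmul M d x)) \<and>
     (\<forall>c d. \<forall>x\<in>mcarr M. msmul M (c * d) x = msmul M c (msmul M d x)) \<and>
     (\<forall>x\<in>mcarr M. msmul M 1 x = x) \<and>
     \<comment> \<open>the generators of kQ act by k-linear maps\<close>
     (\<forall>v. \<forall>x\<in>mcarr M. midem M v x \<in> mcarr M) \<and>
     (\<forall>a. \<forall>x\<in>mcarr M. marr M a x \<in> mcarr M) \<and>
     (\<forall>v. \<forall>x\<in>mcarr M. \<forall>y\<in>mcarr M. midem M v (madd M x y) = madd M (midem M v x) (midem M v y)) \<and>
     (\<forall>a. \<forall>x\<in>mcarr M. \<forall>y\<in>mcarr M. marr M a (madd M x y) = madd M (marr M a x) (marr M a y)) \<and>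
     (\<forall>v c. \<forall>x\<in>mcarr M. midem M v (msmul M c x) = msmul M c (midem M v x)) \<and>
     (\<forall>a c. \<forall>x\<in>mcarr M. marr M a (msmul M c x) = msmul M c (marr M a x)) \<and>
     \<comment> \<open>defining relations of kQ: e_w e_v = \<delta> e_v, sum of e_v = 1, e_{s a} a = a = a e_{t a}\<close>
     (\<forall>v w. \<forall>x\<in>mcarr M. midem M v (midem M w x) = (if v = w then midem M w x else mzero M)) \<and>
     (\<forall>x\<in>mcarr M. \<forall>xs. set xs = UNIV \<and> distinct xs \<longrightarrow> x = lsum M (\<lambda>v. midem M v x) xs) \<and>
     (\<forall>a. \<forall>x\<in>mcarr M. marr M a (midem M (src a) x) = marr M a x) \<and>
     (\<forall>a. \<forall>x\<in>mcarr M. midem M (tgt a) (marr M a x) = marr M a x) \<and>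
     \<comment> \<open>grading M = \<Oplus>_{i\<ge>0} M_i, with kQ_1 M_i \<subseteq> M_{i+1}\<close>
     (\<forall>i. mgr M i \<subseteq> mcarr M \<and> mzero M \<in> mgr M i) \<and>
     (\<forall>i. \<forall>x\<in>mgr M i. \<forall>y\<in>mgr M i. madd M x y \<in> mgr M i) \<and>
     (\<forall>i c. \<forall>x\<in>mgr M i. msmul M c x \<in> mgr M i) \<and>
     (\<forall>i v. \<forall>x\<in>mgr M i. midem M v x \<in> mgr M i) \<and>
     (\<forall>i a. \<forall>x\<in>mgr M i. marr M a x \<in> mgr M (Suc i)) \<and>
     (\<forall>x\<in>mcarr M. \<exists>N ms. (\<forall>i<N. ms i \<in> mgr M i) \<and> x = lsum M ms [0..<N]) \<and>
     (\<forall>N ms. (\<forall>i<N. ms i \<in> mgr M i) \<and> lsum M ms [0..<N] = mzero M \<longrightarrow> (\<forall>i<N. ms i = mzero M))"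

definition path_act :: "('k, 'v, 'e, 'm, 'z) qmod_scheme \<Rightarrow> 'v \<Rightarrow> 'e list \<Rightarrow> 'm \<Rightarrow> 'm" where
  "path_act M v p x = foldl (\<lambda>y a. marr M a y) (midem M v x) p"

text \<open>x is annihilated by (kQ)_{\<ge>n}, which is spanned by the paths of length \<ge> n.\<close>

definition ann_ge :: "('e \<Rightarrow> 'v) \<Rightarrow> ('e \<Rightarrow> 'v) \<Rightarrow> ('k, 'v, 'e, 'm, 'z) qmod_scheme \<Rightarrow> nat \<Rightarrow> 'm \<Rightarrow> bool" where
  "ann_ge src tgt M n x \<longleftrightarrow>
     (\<forall>v p. pathfrom src tgt v p \<and> n \<le> length p \<longrightarrow> path_act M v p x = mzero M)"

definition tors :: "('e \<Rightarrow> 'v) \<Rightarrow> ('e \<Rightarrow> 'v) \<Rightarrow> ('k, 'v, 'e, 'm, 'z) qmod_scheme \<Rightarrow> 'm set" where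
  "tors src tgt M = {x \<in> mcarr M. \<exists>n. ann_ge src tgt M n x}"

definition gr_submod :: "('k, 'v, 'e, 'm, 'z) qmod_scheme \<Rightarrow> 'm set \<Rightarrow> bool" where
  "gr_submod M S \<longleftrightarrow> S \<subseteq> mcarr M \<and> mzero M \<in> S \<and>
     (\<forall>x\<in>S. \<forall>y\<in>S. madd M x y \<in> S) \<and> (\<forall>c. \<forall>x\<in>S. msmul M c x \<in> S) \<and>
     (\<forall>v. \<forall>x\<in>S. midem M v x \<in> S) \<and> (\<forall>a. \<forall>x\<in>S. marr M a x \<in> S) \<and>
     (\<forall>x\<in>S. \<exists>N ms. (\<forall>i<N. ms i \<in> mgr M i \<inter> S) \<and> x = lsum M ms [0..<N])"

definition quot_torsion :: "('e \<Rightarrow> 'v) \<Rightarrow> ('e \<Rightarrow> 'v) \<Rightarrow> ('k, 'v, 'e, 'm, 'z) qmod_scheme \<Rightarrow> 'm set \<Rightarrow> bool" where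
  "quot_torsion src tgt M S \<longleftrightarrow>
     (\<forall>x\<in>mcarr M. \<exists>n. \<forall>v p. pathfrom src tgt v p \<and> n \<le> length p \<longrightarrow> path_act M v p x \<in> S)"

text \<open>Morphisms \<pi>*M \<rightarrow> \<pi>*N in the Serre quotient are
represented by graded (degree 0) homomorphisms f : M' \<rightarrow> N/\<tau>N with M' \<subseteq> M a graded
submodule such that M/M' is torsion; such a morphism is an isomorphism iff ker f and
coker f are torsion. A map into N/\<tau>N is represented by a map into N taken modulo \<tau>N.\<close>

definition qgr_iso :: "('e::finite \<Rightarrow> 'v::finite) \<Rightarrow> ('e \<Rightarrow> 'v)
    \<Rightarrow> ('k::field, 'v, 'e, 'm, 'z) qmod_scheme \<Rightarrow> ('k, 'v, 'e, 'n, 'w) qmod_scheme \<Rightarrow> bool" where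
  "qgr_iso src tgt M N \<longleftrightarrow>
     (\<exists>S f. gr_submod M S \<and> quot_torsion src tgt M S \<and>
        (\<forall>x\<in>S. f x \<in> mcarr N) \<and>
        (\<forall>x\<in>S. \<forall>y\<in>S. msub N (f (madd M x y)) (madd N (f x) (f y)) \<in> tors src tgt N) \<and>
        (\<forall>c. \<forall>x\<in>S. msub N (f (msmul M c x)) (msmul N c (f x)) \<in> tors src tgt N) \<and>
        (\<forall>v. \<forall>x\<in>S. msub N (f (midem M v x)) (midem N v (f x)) \<in> tors src tgt N) \<and>
        (\<forall>a. \<forall>x\<in>S. msub N (f (marr M a x)) (marr N a (f x)) \<in> tors src tgt N) \<and>
        (\<forall>i. \<forall>x\<in>S \<inter> mgr M i. \<exists>y\<in>mgr N i. msub N (f x) y \<in> tors src tgt N) \<and>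
        (\<forall>x\<in>S. f x \<in> tors src tgt N \<longrightarrow> x \<in> tors src tgt M) \<and>
        (\<forall>y\<in>mcarr N. \<exists>n. \<forall>v p. pathfrom src tgt v p \<and> n \<le> length p \<longrightarrow>
            (\<exists>x\<in>S. msub N (path_act N v p y) (f x) \<in> tors src tgt N)))"

definition point_module :: "('e::finite \<Rightarrow> 'v::finite) \<Rightarrow> ('e \<Rightarrow> 'v)
    \<Rightarrow> ('k::field, 'v, 'e, 'm, 'z) qmod_scheme \<Rightarrow> bool" where
  "point_module src tgt M \<longleftrightarrow> grmod src tgt M \<and>
     (\<forall>x\<in>mcarr M. \<exists>ts. (\<forall>(y, v, p)\<in>set ts. y \<in> mgr M 0 \<and> pathfrom src tgt v p) \<and>
                        x = lsum M (\<lambda>(y, v, p). path_act M v p y) ts) \<and>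
     (\<forall>i. \<exists>x\<in>mgr M i. x \<noteq> mzero M \<and> (\<forall>y\<in>mgr M i. \<exists>c. y = msmul M c x))"

definition simple_cycle :: "('e \<Rightarrow> 'v) \<Rightarrow> ('e \<Rightarrow> 'v) \<Rightarrow> 'v \<Rightarrow> 'e list \<Rightarrow> bool" where
  "simple_cycle src tgt v cyc \<longleftrightarrow> cyc \<noteq> [] \<and> pathfrom src tgt v cyc \<and> endv tgt v cyc = v \<and>
     distinct (map src cyc)"

text \<open>The right module e_v kQ: elements are finitely supported k-linear combinations of
paths starting at v; a path q is right multiplied by an arrow a to q a (or 0).\<close>

definition path_mod :: "('e \<Rightarrow> 'v) \<Rightarrow> ('e \<Rightarrow> 'v) \<Rightarrow> 'v \<Rightarrow> ('k::field, 'v, 'e, 'e list \<Rightarrow> 'k) qmod" where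
  "path_mod src tgt v =
    \<lparr> mcarr = {c. finite {q. c q \<noteq> 0} \<and> (\<forall>q. c q \<noteq> 0 \<longrightarrow> pathfrom src tgt v q)},
      mzero = (\<lambda>q. 0),
      madd = (\<lambda>c d q. c q + d q),
      msmul = (\<lambda>s c q. s * c q),
      midem = (\<lambda>w c q. if endv tgt v q = w then c q else 0),
      marr = (\<lambda>a c q. if q \<noteq> [] \<and> last q = a \<and> pathfrom src tgt v q then c (butlast q) else 0),
      mgr = (\<lambda>i. {c. finite {q. c q \<noteq> 0} \<and> (\<forall>q. c q \<noteq> 0 \<longrightarrow> pathfrom src tgt v q)
                     \<and> (\<forall>q. length q \<noteq> i \<longrightarrow> c q = 0)}) \<rparr>"

definition coset :: "('k, 'v, 'e, 'm, 'z) qmod_scheme \<Rightarrow> 'm set \<Rightarrow> 'm \<Rightarrow> 'm set" where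
  "coset M U x = {madd M x u | u. u \<in> U}"

definition quot_mod :: "('k, 'v, 'e, 'm, 'z) qmod_scheme \<Rightarrow> 'm set \<Rightarrow> ('k, 'v, 'e, 'm set) qmod" where
  "quot_mod M U =
    (let rep = (\<lambda>X. SOME x. x \<in> X) in
    \<lparr> mcarr = coset M U ` mcarr M,
      mzero = coset M U (mzero M),
      madd = (\<lambda>X Y. coset M U (madd M (rep X) (rep Y))),
      msmul = (\<lambda>c X. coset M U (msmul M c (rep X))),
      midem = (\<lambda>w X. coset M U (midem M w (rep X))),
      marr = (\<lambda>a X. coset M U (marr M a (rep X))),
      mgr = (\<lambda>i. coset M U ` mgr M i) \<rparr>)"

definition off_cycle :: "('e \<Rightarrow> 'v) \<Rightarrow> 'e list \<Rightarrow> 'e list \<Rightarrow> bool" where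
  "off_cycle src cyc q \<longleftrightarrow> (\<exists>m i b r. i < length cyc \<and> b \<noteq> cyc ! i \<and> src b = src (cyc ! i) \<and>
       q = concat (replicate m cyc) @ take i cyc @ [b] @ r)"

definition off_submod :: "('e \<Rightarrow> 'v) \<Rightarrow> ('e \<Rightarrow> 'v) \<Rightarrow> 'v \<Rightarrow> 'e list \<Rightarrow> ('e list \<Rightarrow> 'k::field) set" where
  "off_submod src tgt v cyc =
     {c \<in> mcarr (path_mod src tgt v :: ('k, 'v, 'e, 'e list \<Rightarrow> 'k) qmod).
        \<forall>q. c q \<noteq> 0 \<longrightarrow> off_cycle src cyc q}"

text \<open>O_v = e_v kQ / \<Oplus> p^m a_1 ... a_i b kQ, for the simple cycle p = cyc at v.\<close>

definition O_mod :: "('e \<Rightarrow> 'v) \<Rightarrow> ('e \<Rightarrow> 'v) \<Rightarrow> 'v \<Rightarrow> 'e list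
    \<Rightarrow> ('k::field, 'v, 'e, ('e list \<Rightarrow> 'k) set) qmod" where
  "O_mod src tgt v cyc = quot_mod (path_mod src tgt v) (off_submod src tgt v cyc)"

end

theory Submission
  imports Defs "HOL-Real_Asymp.Real_Asymp"
begin


lemma pathfrom_append[simp]: "pathfrom src tgt v (p @ q) = (pathfrom src tgt v p \<and> pathfrom src tgt (endv tgt v p) q)"
  by (induction p arbitrary: v) auto

lemma endv_append[simp]: "endv tgt v (p @ q) = endv tgt (endv tgt v p) q"
  by (induction p arbitrary: v) auto

lemma pathfrom_nth_src: "pathfrom src tgt v q \<Longrightarrow> j < length q \<Longrightarrow> src (q ! j) = endv tgt v (take j q)"
proof (induction q arbitrary: v j)
  case Nil thus ?case by simp
next
  case (Cons a q) thus ?case by (cases j) auto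
qed


lemma finite_paths_le: "finite {(v, p). pathfrom src tgt (v::'v::finite) (p::'e::finite list) \<and> length p \<le> n}"
proof -
  have "{(v, p). pathfrom src tgt (v::'v) (p::'e list) \<and> length p \<le> n} \<subseteq> UNIV \<times> {xs. set xs \<subseteq> UNIV \<and> length xs \<le> n}"
    by auto
  moreover have "finite ((UNIV::'v set) \<times> {xs::'e list. set xs \<subseteq> UNIV \<and> length xs \<le> n})"
    using finite_lists_length_le[of "UNIV::'e set" n] by (intro finite_cartesian_product) auto
  ultimately show ?thesis by (rule finite_subset)
qed

lemma gk_from_lower:
  fixes src tgt :: "'e::finite \<Rightarrow> 'v::finite"
  assumes L: "L > 0" and lb: "\<And>n. 2 ^ (n div L) \<le> card {(v, p). pathfrom src tgt v p \<and> length p \<le> n}"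
  shows "gk_dim src tgt = \<infinity>"
proof -
  define c where "c n = card {(v, p). pathfrom src tgt v p \<and> length p \<le> n}" for n
  define g where "g n = ln (real (c n)) / ln (real n)" for n
  define h where "h n = (real n / real L - 1) * ln 2 / ln (real n)" for n
  have hlim: "filterlim h at_top sequentially" unfolding h_def using L by real_asymp
  have ev: "\<forall>\<^sub>F n in sequentially. h n \<le> g n"
  proof (rule eventually_sequentiallyI[of 2])
    fix n :: nat assume n2: "2 \<le> n"
    have lnpos: "ln (real n) > 0" using n2 by simp
    have c0: "2 ^ (n div L) \<le> c n" using lb[of n] unfolding c_def .
    have c1': "real (2 ^ (n div L)) \<le> real (c n)" by (rule of_nat_mono[OF c0])
    have c1: "(2::real) ^ (n div L) \<le> real (c n)" using c1' by simp
    have "(0::real) < 2 ^ (n div L)" by simp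
    hence cpos: "real (c n) > 0" using c1 by linarith
    have "ln ((2::real) ^ (n div L)) \<le> ln (real (c n))" using c1 cpos by (subst ln_le_cancel_iff) auto
    hence A: "real (n div L) * ln 2 \<le> ln (real (c n))" by (simp add: ln_realpow)
    have nn: "n = L * (n div L) + n mod L" by simp
    have "real n = real (L * (n div L) + n mod L)" using nn by (rule arg_cong)
    hence "real n = real L * real (n div L) + real (n mod L)" by (simp only: of_nat_add of_nat_mult)
    moreover have "real (n mod L) < real L" using L by simp
    ultimately have "real n < real L * (real (n div L) + 1)" by (simp add: algebra_simps)
    hence "real n / real L < real (n div L) + 1" using L by (simp add: divide_less_eq mult.commute)
    hence "real n / real L - 1 \<le> real (n div L)" by simp
    hence "(real n / real L - 1) * ln 2 \<le> real (n div L) * ln 2"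
      by (rule mult_right_mono) simp
    hence "(real n / real L - 1) * ln 2 \<le> ln (real (c n))" using A by linarith
    thus "h n \<le> g n" unfolding h_def g_def by (rule divide_right_mono) (use lnpos in simp)
  qed
  have "filterlim g at_top sequentially" by (rule filterlim_at_top_mono[OF hlim ev])
  hence "((\<lambda>n. ereal (g n)) \<longlongrightarrow> \<infinity>) sequentially" by (simp add: tendsto_PInfty_eq_at_top)
  hence "limsup (\<lambda>n. ereal (g n)) = \<infinity>" by (intro lim_imp_Limsup) auto
  thus ?thesis unfolding gk_dim_def g_def c_def .
qed

definition wordAB :: "'e list \<Rightarrow> 'e list \<Rightarrow> bool list \<Rightarrow> 'e list" where
  "wordAB A B bs = concat (map (\<lambda>b. if b then A else B) bs)"

lemma gk_comm:
  fixes src tgt :: "'e::finite \<Rightarrow> 'v::finite"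
  assumes gk: "gk_dim src tgt < \<infinity>"
    and p1: "pathfrom src tgt u w1" "endv tgt u w1 = u"
    and p2: "pathfrom src tgt u w2" "endv tgt u w2 = u"
  shows "w1 @ w2 = w2 @ w1"
proof (rule ccontr)
  assume ne: "w1 @ w2 \<noteq> w2 @ w1"
  define A where "A = w1 @ w2"
  define B where "B = w2 @ w1"
  define L where "L = length A"
  have lB: "length B = L" unfolding L_def A_def B_def by simp
  have L: "L > 0" using ne unfolding L_def A_def by auto
  have pA: "pathfrom src tgt u A" "endv tgt u A = u" unfolding A_def using p1 p2 by auto
  have pB: "pathfrom src tgt u B" "endv tgt u B = u" unfolding B_def using p1 p2 by auto
  have wp: "pathfrom src tgt u (wordAB A B bs) \<and> endv tgt u (wordAB A B bs) = u" for bs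
    by (induction bs) (auto simp: wordAB_def pA pB)
  have wl: "length (wordAB A B bs) = length bs * L" for bs
    by (induction bs) (auto simp: wordAB_def L_def lB)
  have winj: "length bs = length cs \<Longrightarrow> wordAB A B bs = wordAB A B cs \<Longrightarrow> bs = cs" for bs cs
  proof (induction bs arbitrary: cs)
    case Nil thus ?case by simp
  next
    case (Cons b bs)
    then obtain c cs' where cs: "cs = c # cs'" by (cases cs) auto
    have e: "(if b then A else B) @ wordAB A B bs = (if c then A else B) @ wordAB A B cs'"
      using Cons.prems cs by (simp add: wordAB_def)
    have "length (if b then A else B) = length (if c then A else B)" by (simp add: lB L_def)
    with e have "(if b then A else B) = (if c then A else B)" "wordAB A B bs = wordAB A B cs'"
      by (auto simp: append_eq_append_conv)
    moreover have "A \<noteq> B" using ne A_def B_def by simp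
    ultimately show ?case using Cons cs by (auto split: if_splits)
  qed
  have lb: "2 ^ (n div L) \<le> card {(v, p). pathfrom src tgt v p \<and> length p \<le> n}" for n
  proof -
    define K where "K = {bs::bool list. set bs \<subseteq> UNIV \<and> length bs = n div L}"
    have cK: "card K = 2 ^ (n div L)" unfolding K_def using card_lists_length_eq[of "UNIV::bool set"] by simp
    have inj: "inj_on (\<lambda>bs. (u, wordAB A B bs)) K" using winj unfolding K_def inj_on_def by auto
    have sub: "(\<lambda>bs. (u, wordAB A B bs)) ` K \<subseteq> {(v, p). pathfrom src tgt v p \<and> length p \<le> n}"
    proof
      fix x assume "x \<in> (\<lambda>bs. (u, wordAB A B bs)) ` K"
      then obtain bs where x: "x = (u, wordAB A B bs)" and "length bs = n div L" unfolding K_def by auto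
      hence "length (wordAB A B bs) \<le> n" using wl by (simp add: times_div_less_eq_dividend)
      thus "x \<in> {(v, p). pathfrom src tgt v p \<and> length p \<le> n}" using x wp by auto
    qed
    have "card ((\<lambda>bs. (u, wordAB A B bs)) ` K) \<le> card {(v, p). pathfrom src tgt v p \<and> length p \<le> n}"
      by (rule card_mono[OF finite_paths_le sub])
    thus ?thesis using card_image[OF inj] cK by simp
  qed
  have "gk_dim src tgt = \<infinity>" by (rule gk_from_lower[OF L lb])
  thus False using gk by simp
qed


lemma upt_split: "a \<le> b \<Longrightarrow> b \<le> c \<Longrightarrow> [a..<c] = [a..<b] @ [b..<c]"
  by (metis le_add_diff_inverse upt_add_eq_append)

lemma walk:
  fixes src tgt :: "'e::finite \<Rightarrow> 'v::finite" and act :: "nat \<Rightarrow> 'e \<Rightarrow> bool"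
  assumes gk: "gk_dim src tgt < \<infinity>"
    and ex: "\<And>i. \<exists>a. act i a"
    and hs: "\<And>i a b. act i a \<Longrightarrow> act i b \<Longrightarrow> src a = src b"
    and ht: "\<And>i a b. act i a \<Longrightarrow> act (Suc i) b \<Longrightarrow> tgt a = src b"
  shows "\<exists>T n \<alpha>. 0 < n \<and> (\<forall>i\<ge>T. \<forall>a. act i a \<longleftrightarrow> a = \<alpha> i) \<and> (\<forall>i\<ge>T. \<alpha> (i + n) = \<alpha> i)
     \<and> (\<forall>i. tgt (\<alpha> i) = src (\<alpha> (Suc i))) \<and> distinct (map (\<lambda>j. src (\<alpha> (T + j))) [0..<n])"
proof -
  define \<beta> where "\<beta> i = (SOME a. act i a)" for i
  have \<beta>a: "act i (\<beta> i)" for i unfolding \<beta>_def using ex[of i] by (rule someI_ex)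
  define W where "W i = src (\<beta> i)" for i
  have Wsrc: "src (\<beta> i) = W i" for i by (simp add: W_def)
  have tW: "tgt (\<beta> i) = W (Suc i)" for i unfolding W_def using ht[OF \<beta>a \<beta>a] .
  define seg where "seg i j = map \<beta> [i..<j]" for i j
  have seg_path: "pathfrom src tgt (W i) (seg i j) \<and> endv tgt (W i) (seg i j) = W j" if "i \<le> j" for i j
    using that
  proof (induction j rule: dec_induct)
    case base thus ?case by (simp add: seg_def)
  next
    case (step k)
    have "seg i (Suc k) = seg i k @ [\<beta> k]" using step.hyps by (simp add: seg_def)
    thus ?case using step.IH by (simp add: W_def tW)
  qed
  have comm: "w1 @ w2 = w2 @ w1" if "pathfrom src tgt z w1" "endv tgt z w1 = z"
     "pathfrom src tgt z w2" "endv tgt z w2 = z" for z w1 w2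
    using gk_comm[OF gk that] .
  have "\<exists>T. \<forall>i\<ge>T. \<forall>m. \<exists>k>m. W k = W i"
  proof -
    define B where "B w = (if \<exists>m. \<forall>k>m. W k \<noteq> w then (SOME m. \<forall>k>m. W k \<noteq> w) else 0)" for w
    define T where "T = Suc (Max (range B))"
    have "\<forall>i\<ge>T. \<forall>m. \<exists>k>m. W k = W i"
    proof (intro allI impI, rule ccontr)
      fix i m assume iT: "T \<le> i" and nk: "\<not> (\<exists>k>m. W k = W i)"
      hence ex1: "\<exists>m. \<forall>k>m. W k \<noteq> W i" by auto
      hence A: "\<forall>k>B (W i). W k \<noteq> W i" unfolding B_def using someI_ex[OF ex1] by simp
      have mx: "B (W i) \<le> Max (range B)" by (rule Max_ge) auto
      have "i > B (W i)" using iT mx unfolding T_def by linarith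
      thus False using A by blast
    qed
    thus ?thesis by blast
  qed
  then obtain T where Tinf: "\<And>i m. T \<le> i \<Longrightarrow> \<exists>k>m. W k = W i" by blast
  have uniq: "a = \<beta> i" if iT: "T \<le> i" and ai: "act i a" for i a
  proof (rule ccontr)
    assume ne: "a \<noteq> \<beta> i"
    have sa: "src a = W i" unfolding W_def using hs[OF ai \<beta>a] .
    have ta: "tgt a = W (Suc i)" using ht[OF ai \<beta>a[of "Suc i"]] by (simp add: W_def)
    obtain k where k: "k > Suc i" "W k = W i" using Tinf[OF iT, of "Suc i"] by blast
    define r where "r = seg (Suc i) k"
    have r: "pathfrom src tgt (W (Suc i)) r" "endv tgt (W (Suc i)) r = W i"
      using seg_path[of "Suc i" k] k unfolding r_def by auto
    have "(a # r) @ (\<beta> i # r) = (\<beta> i # r) @ (a # r)"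
      by (rule comm[of "W i"]) (auto simp: sa ta r tW Wsrc)
    thus False using ne by simp
  qed
  define u where "u = W T"
  have "\<exists>k>T. W k = u" using Tinf[of T T] unfolding u_def by auto
  define t1 where "t1 = (LEAST k. T < k \<and> W k = u)"
  have t1: "T < t1" "W t1 = u" using LeastI_ex[OF \<open>\<exists>k>T. W k = u\<close>] unfolding t1_def by auto
  have t1min: "W k \<noteq> u" if "T < k" "k < t1" for k
    using not_less_Least[of k "\<lambda>k. T < k \<and> W k = u"] that unfolding t1_def by auto
  define n where "n = t1 - T"
  have n0: "0 < n" using t1 n_def by simp
  have step: "W (s + n) = u \<and> (\<forall>j<n. \<beta> (s + j) = \<beta> (T + j))" if sT: "T \<le> s" and su: "W s = u" for s
  proof -
    have "\<exists>k>s. W k = u" using Tinf[OF sT, of s] su by auto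
    define s' where "s' = (LEAST k. s < k \<and> W k = u)"
    have s': "s < s'" "W s' = u" using LeastI_ex[OF \<open>\<exists>k>s. W k = u\<close>] unfolding s'_def by auto
    have s'min: "W k \<noteq> u" if "s < k" "k < s'" for k
      using not_less_Least[of k "\<lambda>k. s < k \<and> W k = u"] that unfolding s'_def by auto
    define w where "w = seg T t1"
    define e where "e = seg s s'"
    have we: "w @ e = e @ w"
      apply (rule comm[of u])
      using seg_path[of T t1] seg_path[of s s'] t1 s' su unfolding w_def e_def u_def by auto
    have lw: "length w = n" unfolding w_def seg_def n_def by simp
    have le: "length e = s' - s" unfolding e_def seg_def by simp
    have nw: "w ! j = \<beta> (T + j)" if "j < n" for j using that t1 unfolding w_def seg_def n_def by simp
    have ne: "e ! j = \<beta> (s + j)" if "j < s' - s" for j using that unfolding e_def seg_def by simp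
    have eqn: "s' - s = n"
    proof (rule ccontr)
      assume "s' - s \<noteq> n"
      hence "n < s' - s \<or> s' - s < n" by auto
      thus False
      proof
        assume a: "n < s' - s"
        have "(w @ e) ! n = e ! 0" using lw by (simp add: nth_append)
        also have "... = \<beta> s" using ne[of 0] a by simp
        finally have "src ((w @ e) ! n) = u" using su W_def by simp
        moreover have "(e @ w) ! n = \<beta> (s + n)" using a le ne[of n] by (simp add: nth_append)
        moreover have "W (s + n) \<noteq> u" using s'min[of "s + n"] a n0 by simp
        ultimately show False using we W_def by simp
      next
        assume a: "s' - s < n"
        have "(e @ w) ! (s' - s) = w ! 0" using le by (simp add: nth_append)
        also have "... = \<beta> T" using nw[of 0] n0 by simp
        finally have "src ((e @ w) ! (s' - s)) = u" using u_def W_def by simp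
        moreover have "(w @ e) ! (s' - s) = \<beta> (T + (s' - s))" using a lw nw by (simp add: nth_append)
        moreover have "W (T + (s' - s)) \<noteq> u" using t1min[of "T + (s' - s)"] a s' n_def by simp
        ultimately show False using we W_def by simp
      qed
    qed
    have "w = e" by (metis append_eq_append_conv lw le eqn we)
    hence "\<forall>j<n. \<beta> (s + j) = \<beta> (T + j)" using nw ne eqn by metis
    moreover have "W (s + n) = u" using s' eqn by (metis add_diff_inverse_nat less_imp_le not_le)
    ultimately show ?thesis by simp
  qed
  have per: "W (T + m * n) = u \<and> (\<forall>j<n. \<beta> (T + m * n + j) = \<beta> (T + j))" for m
  proof (induction m)
    case 0 thus ?case using u_def by simp
  next
    case (Suc m)
    have "W (T + m * n + n) = u \<and> (\<forall>j<n. \<beta> (T + m * n + j) = \<beta> (T + j))"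
      using step[of "T + m * n"] Suc.IH by simp
    moreover have "T + Suc m * n = T + m * n + n" by simp
    ultimately have A: "W (T + Suc m * n) = u" by (metis add.assoc)
    have "\<forall>j<n. \<beta> (T + Suc m * n + j) = \<beta> (T + j)" using step[of "T + Suc m * n"] A by simp
    thus ?case using A by simp
  qed
  have bper: "\<beta> (i + n) = \<beta> i" if "T \<le> i" for i
  proof -
    define m where "m = (i - T) div n"
    define j where "j = (i - T) mod n"
    have i: "i = T + m * n + j" using that unfolding m_def j_def by simp
    have j: "j < n" unfolding j_def using n0 by simp
    have "\<beta> i = \<beta> (T + j)" using per[of m] i j by simp
    moreover have "\<beta> (i + n) = \<beta> (T + j)"
    proof -
      have e: "i + n = T + Suc m * n + j" using i by simp
      have "\<beta> (T + Suc m * n + j) = \<beta> (T + j)" using per[of "Suc m"] j by blast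
      thus ?thesis by (simp only: e)
    qed
    ultimately show ?thesis by simp
  qed
  have Wper: "W (i + n) = W i" if "T \<le> i" for i using bper[OF that] W_def by simp
  have dist: "distinct (map (\<lambda>j. src (\<beta> (T + j))) [0..<n])"
  proof -
    have key: "W (T + p) \<noteq> W (T + q)" if pq: "p < q" "q < n" for p q
    proof
      assume eq: "W (T + p) = W (T + q)"
      define r where "r = seg (T + p) (T + q)"
      define rest where "rest = seg (T + q) (T + p + n)"
      have "r @ rest = rest @ r"
        apply (rule comm[of "W (T + p)"])
        using seg_path[of "T + p" "T + q"] seg_path[of "T + q" "T + p + n"] pq eq Wper[of "T + p"]
        unfolding r_def rest_def by (auto simp: add.assoc)
      moreover have "r @ rest = seg (T + p) (T + p + n)" unfolding r_def rest_def seg_def using pq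
        by (simp add: upt_split[of "T + p" "T + q" "T + p + n"])
      ultimately have E: "seg (T + p) (T + p + n) ! (n - q) = (rest @ r) ! (n - q)" by simp
      have L: "src (seg (T + p) (T + p + n) ! (n - q)) \<noteq> u"
      proof -
        have "seg (T + p) (T + p + n) ! (n - q) = \<beta> (T + p + (n - q))" unfolding seg_def using pq
          by simp
        also have "T + p + (n - q) = T + (p + n - q)" using pq by simp
        finally have "seg (T + p) (T + p + n) ! (n - q) = \<beta> (T + (p + n - q))" .
        moreover have "W (T + (p + n - q)) \<noteq> u" using t1min[of "T + (p + n - q)"] pq n_def by simp
        ultimately show ?thesis using W_def by simp
      qed
      have lr: "length rest = p + n - q" unfolding rest_def seg_def by simp
      have R: "src ((rest @ r) ! (n - q)) = u"
      proof (cases "p = 0")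
        case True
        hence "(rest @ r) ! (n - q) = r ! 0" using lr by (simp add: nth_append)
        also have "... = \<beta> T" unfolding r_def seg_def using True pq by simp
        finally show ?thesis using u_def W_def by simp
      next
        case False
        hence "n - q < length rest" using lr pq by simp
        hence "(rest @ r) ! (n - q) = rest ! (n - q)" by (simp add: nth_append)
        also have "... = \<beta> (T + n)" unfolding rest_def seg_def using False pq by simp
        finally show ?thesis using t1 n_def W_def by simp
      qed
      show False using E L R by simp
    qed
    show ?thesis unfolding distinct_conv_nth
    proof (intro allI impI)
      fix i j assume "i < length (map (\<lambda>j. src (\<beta> (T + j))) [0..<n])"
        "j < length (map (\<lambda>j. src (\<beta> (T + j))) [0..<n])" "i \<noteq> j"
      thus "map (\<lambda>j. src (\<beta> (T + j))) [0..<n] ! i \<noteq> map (\<lambda>j. src (\<beta> (T + j))) [0..<n] ! j"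
        using key[of i j] key[of j i] W_def by (cases "i < j") auto
    qed
  qed
  have "\<forall>i\<ge>T. \<forall>a. act i a \<longleftrightarrow> a = \<beta> i" using uniq \<beta>a by blast
  moreover have "\<forall>i. tgt (\<beta> i) = src (\<beta> (Suc i))" using tW W_def by simp
  ultimately show ?thesis using n0 bper dist by blast
qed


locale gm =
  fixes src tgt :: "'e::finite \<Rightarrow> 'v::finite" and M :: "('k::field, 'v, 'e, 'm) qmod"
  assumes gm: "grmod src tgt M"
begin

lemmas c_z_in = gm[unfolded grmod_def, THEN conjunct1]
lemmas c_ad_in = gm[unfolded grmod_def, THEN conjunct2, THEN conjunct1]
lemmas c_sm_in = gm[unfolded grmod_def, THEN conjunct2, THEN conjunct2, THEN conjunct1]
lemmas c_ad_assoc = gm[unfolded grmod_def, THEN conjunct2, THEN conjunct2, THEN conjunct2, THEN conjunct1]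
lemmas c_ad_comm = gm[unfolded grmod_def, THEN conjunct2, THEN conjunct2, THEN conjunct2, THEN conjunct2, THEN conjunct1]
lemmas c_ad_z = gm[unfolded grmod_def, THEN conjunct2, THEN conjunct2, THEN conjunct2, THEN conjunct2, THEN conjunct2, THEN conjunct1]
lemmas c_ad_neg = gm[unfolded grmod_def, THEN conjunct2, THEN conjunct2, THEN conjunct2, THEN conjunct2, THEN conjunct2, THEN conjunct2, THEN conjunct1]
lemmas c_sm_ad = gm[unfolded grmod_def, THEN conjunct2, THEN conjunct2, THEN conjunct2, THEN conjunct2, THEN conjunct2, THEN conjunct2, THEN conjunct2, THEN conjunct1]
lemmas c_ad_sm = gm[unfolded grmod_def, THEN conjunct2, THEN conjunct2, THEN conjunct2, THEN conjunct2, THEN conjunct2, THEN conjunct2, THEN conjunct2, THEN conjunct2, THEN conjunct1]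
lemmas c_sm_sm = gm[unfolded grmod_def, THEN conjunct2, THEN conjunct2, THEN conjunct2, THEN conjunct2, THEN conjunct2, THEN conjunct2, THEN conjunct2, THEN conjunct2, THEN conjunct2, THEN conjunct1]
lemmas c_sm_one = gm[unfolded grmod_def, THEN conjunct2, THEN conjunct2, THEN conjunct2, THEN conjunct2, THEN conjunct2, THEN conjunct2, THEN conjunct2, THEN conjunct2, THEN conjunct2, THEN conjunct2, THEN conjunct1]
lemmas c_idem_in = gm[unfolded grmod_def, THEN conjunct2, THEN conjunct2, THEN conjunct2, THEN conjunct2, THEN conjunct2, THEN conjunct2, THEN conjunct2, THEN conjunct2, THEN conjunct2, THEN conjunct2, THEN conjunct2, THEN conjunct1]
lemmas c_arr_in = gm[unfolded grmod_def, THEN conjunct2, THEN conjunct2, THEN conjunct2, THEN conjunct2, THEN conjunct2, THEN conjunct2, THEN conjunct2, THEN conjunct2, THEN conjunct2, THEN conjunct2, THEN conjunct2, THEN conjunct2, THEN conjunct1]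
lemmas c_idem_ad = gm[unfolded grmod_def, THEN conjunct2, THEN conjunct2, THEN conjunct2, THEN conjunct2, THEN conjunct2, THEN conjunct2, THEN conjunct2, THEN conjunct2, THEN conjunct2, THEN conjunct2, THEN conjunct2, THEN conjunct2, THEN conjunct2, THEN conjunct1]
lemmas c_arr_ad = gm[unfolded grmod_def, THEN conjunct2, THEN conjunct2, THEN conjunct2, THEN conjunct2, THEN conjunct2, THEN conjunct2, THEN conjunct2, THEN conjunct2, THEN conjunct2, THEN conjunct2, THEN conjunct2, THEN conjunct2, THEN conjunct2, THEN conjunct2, THEN conjunct1]
lemmas c_idem_sm = gm[unfolded grmod_def, THEN conjunct2, THEN conjunct2, THEN conjunct2, THEN conjunct2, THEN conjunct2, THEN conjunct2, THEN conjunct2, THEN conjunct2, THEN conjunct2, THEN conjunct2, THEN conjunct2, THEN conjunct2, THEN conjunct2, THEN conjunct2, THEN conjunct2, THEN conjunct1]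
lemmas c_arr_sm = gm[unfolded grmod_def, THEN conjunct2, THEN conjunct2, THEN conjunct2, THEN conjunct2, THEN conjunct2, THEN conjunct2, THEN conjunct2, THEN conjunct2, THEN conjunct2, THEN conjunct2, THEN conjunct2, THEN conjunct2, THEN conjunct2, THEN conjunct2, THEN conjunct2, THEN conjunct2, THEN conjunct1]
lemmas c_idem_idem = gm[unfolded grmod_def, THEN conjunct2, THEN conjunct2, THEN conjunct2, THEN conjunct2, THEN conjunct2, THEN conjunct2, THEN conjunct2, THEN conjunct2, THEN conjunct2, THEN conjunct2, THEN conjunct2, THEN conjunct2, THEN conjunct2, THEN conjunct2, THEN conjunct2, THEN conjunct2, THEN conjunct2, THEN conjunct1]
lemmas c_sumidem = gm[unfolded grmod_def, THEN conjunct2, THEN conjunct2, THEN conjunct2, THEN conjunct2, THEN conjunct2, THEN conjunct2, THEN conjunct2, THEN conjunct2, THEN conjunct2, THEN conjunct2, THEN conjunct2, THEN conjunct2, THEN conjunct2, THEN conjunct2, THEN conjunct2, THEN conjunct2, THEN conjunct2, THEN conjunct2, THEN conjunct1]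
lemmas c_arr_src = gm[unfolded grmod_def, THEN conjunct2, THEN conjunct2, THEN conjunct2, THEN conjunct2, THEN conjunct2, THEN conjunct2, THEN conjunct2, THEN conjunct2, THEN conjunct2, THEN conjunct2, THEN conjunct2, THEN conjunct2, THEN conjunct2, THEN conjunct2, THEN conjunct2, THEN conjunct2, THEN conjunct2, THEN conjunct2, THEN conjunct2, THEN conjunct1]
lemmas c_tgt_arr = gm[unfolded grmod_def, THEN conjunct2, THEN conjunct2, THEN conjunct2, THEN conjunct2, THEN conjunct2, THEN conjunct2, THEN conjunct2, THEN conjunct2, THEN conjunct2, THEN conjunct2, THEN conjunct2, THEN conjunct2, THEN conjunct2, THEN conjunct2, THEN conjunct2, THEN conjunct2, THEN conjunct2, THEN conjunct2, THEN conjunct2, THEN conjunct2, THEN conjunct1]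
lemmas c_gsubz = gm[unfolded grmod_def, THEN conjunct2, THEN conjunct2, THEN conjunct2, THEN conjunct2, THEN conjunct2, THEN conjunct2, THEN conjunct2, THEN conjunct2, THEN conjunct2, THEN conjunct2, THEN conjunct2, THEN conjunct2, THEN conjunct2, THEN conjunct2, THEN conjunct2, THEN conjunct2, THEN conjunct2, THEN conjunct2, THEN conjunct2, THEN conjunct2, THEN conjunct2, THEN conjunct1]
lemmas c_ad_g = gm[unfolded grmod_def, THEN conjunct2, THEN conjunct2, THEN conjunct2, THEN conjunct2, THEN conjunct2, THEN conjunct2, THEN conjunct2, THEN conjunct2, THEN conjunct2, THEN conjunct2, THEN conjunct2, THEN conjunct2, THEN conjunct2, THEN conjunct2, THEN conjunct2, THEN conjunct2, THEN conjunct2, THEN conjunct2, THEN conjunct2, THEN conjunct2, THEN conjunct2, THEN conjunct2, THEN conjunct1]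
lemmas c_sm_g = gm[unfolded grmod_def, THEN conjunct2, THEN conjunct2, THEN conjunct2, THEN conjunct2, THEN conjunct2, THEN conjunct2, THEN conjunct2, THEN conjunct2, THEN conjunct2, THEN conjunct2, THEN conjunct2, THEN conjunct2, THEN conjunct2, THEN conjunct2, THEN conjunct2, THEN conjunct2, THEN conjunct2, THEN conjunct2, THEN conjunct2, THEN conjunct2, THEN conjunct2, THEN conjunct2, THEN conjunct2, THEN conjunct1]
lemmas c_idem_g = gm[unfolded grmod_def, THEN conjunct2, THEN conjunct2, THEN conjunct2, THEN conjunct2, THEN conjunct2, THEN conjunct2, THEN conjunct2, THEN conjunct2, THEN conjunct2, THEN conjunct2, THEN conjunct2, THEN conjunct2, THEN conjunct2, THEN conjunct2, THEN conjunct2, THEN conjunct2, THEN conjunct2, THEN conjunct2, THEN conjunct2, THEN conjunct2, THEN conjunct2, THEN conjunct2, THEN conjunct2, THEN conjunct2, THEN conjunct1]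
lemmas c_arr_g = gm[unfolded grmod_def, THEN conjunct2, THEN conjunct2, THEN conjunct2, THEN conjunct2, THEN conjunct2, THEN conjunct2, THEN conjunct2, THEN conjunct2, THEN conjunct2, THEN conjunct2, THEN conjunct2, THEN conjunct2, THEN conjunct2, THEN conjunct2, THEN conjunct2, THEN conjunct2, THEN conjunct2, THEN conjunct2, THEN conjunct2, THEN conjunct2, THEN conjunct2, THEN conjunct2, THEN conjunct2, THEN conjunct2, THEN conjunct2, THEN conjunct1]
lemmas c_decomp = gm[unfolded grmod_def, THEN conjunct2, THEN conjunct2, THEN conjunct2, THEN conjunct2, THEN conjunct2, THEN conjunct2, THEN conjunct2, THEN conjunct2, THEN conjunct2, THEN conjunct2, THEN conjunct2, THEN conjunct2, THEN conjunct2, THEN conjunct2, THEN conjunct2, THEN conjunct2, THEN conjunct2, THEN conjunct2, THEN conjunct2, THEN conjunct2, THEN conjunct2, THEN conjunct2, THEN conjunct2, THEN conjunct2, THEN conjunct2, THEN conjunct2, THEN conjunct1]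
lemmas c_dsum = gm[unfolded grmod_def, THEN conjunct2, THEN conjunct2, THEN conjunct2, THEN conjunct2, THEN conjunct2, THEN conjunct2, THEN conjunct2, THEN conjunct2, THEN conjunct2, THEN conjunct2, THEN conjunct2, THEN conjunct2, THEN conjunct2, THEN conjunct2, THEN conjunct2, THEN conjunct2, THEN conjunct2, THEN conjunct2, THEN conjunct2, THEN conjunct2, THEN conjunct2, THEN conjunct2, THEN conjunct2, THEN conjunct2, THEN conjunct2, THEN conjunct2, THEN conjunct2]

abbreviation "C \<equiv> mcarr M"
abbreviation "z \<equiv> mzero M"
abbreviation "ad \<equiv> madd M"
abbreviation "sm \<equiv> msmul M"
abbreviation "G \<equiv> mgr M"

lemma z_in[simp]: "z \<in> C" using c_z_in by blast
lemma ad_in[simp]: "x \<in> C \<Longrightarrow> y \<in> C \<Longrightarrow> ad x y \<in> C" using c_ad_in by blast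
lemma sm_in[simp]: "x \<in> C \<Longrightarrow> sm c x \<in> C" using c_sm_in by blast
lemma ad_assoc: "x \<in> C \<Longrightarrow> y \<in> C \<Longrightarrow> w \<in> C \<Longrightarrow> ad (ad x y) w = ad x (ad y w)"
  using c_ad_assoc by blast
lemma ad_comm: "x \<in> C \<Longrightarrow> y \<in> C \<Longrightarrow> ad x y = ad y x" using c_ad_comm by blast
lemma ad_z[simp]: "x \<in> C \<Longrightarrow> ad z x = x" using c_ad_z by blast
lemma ad_z2[simp]: "x \<in> C \<Longrightarrow> ad x z = x" using ad_comm[of x z] by simp
lemma ad_neg: "x \<in> C \<Longrightarrow> ad x (sm (-1) x) = z" using c_ad_neg by blast
lemma sm_ad: "x \<in> C \<Longrightarrow> y \<in> C \<Longrightarrow> sm c (ad x y) = ad (sm c x) (sm c y)"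
  using c_sm_ad by blast
lemma ad_sm: "x \<in> C \<Longrightarrow> sm (c + d) x = ad (sm c x) (sm d x)" using c_ad_sm by blast
lemma sm_sm: "x \<in> C \<Longrightarrow> sm (c * d) x = sm c (sm d x)" using c_sm_sm by blast
lemma sm_one[simp]: "x \<in> C \<Longrightarrow> sm 1 x = x" using c_sm_one by blast
lemma idem_in[simp]: "x \<in> C \<Longrightarrow> midem M v x \<in> C" using c_idem_in by blast
lemma arr_in[simp]: "x \<in> C \<Longrightarrow> marr M a x \<in> C" using c_arr_in by blast
lemma idem_ad: "x \<in> C \<Longrightarrow> y \<in> C \<Longrightarrow> midem M v (ad x y) = ad (midem M v x) (midem M v y)"
  using c_idem_ad by blast
lemma arr_ad: "x \<in> C \<Longrightarrow> y \<in> C \<Longrightarrow> marr M a (ad x y) = ad (marr M a x) (marr M a y)"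
  using c_arr_ad by blast
lemma idem_sm: "x \<in> C \<Longrightarrow> midem M v (sm c x) = sm c (midem M v x)" using c_idem_sm by blast
lemma arr_sm: "x \<in> C \<Longrightarrow> marr M a (sm c x) = sm c (marr M a x)" using c_arr_sm by blast
lemma idem_idem: "x \<in> C \<Longrightarrow> midem M v (midem M w x) = (if v = w then midem M w x else z)"
  using c_idem_idem by blast
lemma arr_src: "x \<in> C \<Longrightarrow> marr M a (midem M (src a) x) = marr M a x" using c_arr_src by blast
lemma tgt_arr: "x \<in> C \<Longrightarrow> midem M (tgt a) (marr M a x) = marr M a x" using c_tgt_arr by blast
lemma G_sub: "G i \<subseteq> C" using c_gsubz by blast
lemma G_C: "x \<in> G i \<Longrightarrow> x \<in> C" using G_sub by blast
lemma z_G[simp]: "z \<in> G i" using c_gsubz by blast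
lemma ad_G: "x \<in> G i \<Longrightarrow> y \<in> G i \<Longrightarrow> ad x y \<in> G i" using c_ad_g by blast
lemma sm_G: "x \<in> G i \<Longrightarrow> sm c x \<in> G i" using c_sm_g by blast
lemma idem_G: "x \<in> G i \<Longrightarrow> midem M v x \<in> G i" using c_idem_g by blast
lemma arr_G: "x \<in> G i \<Longrightarrow> marr M a x \<in> G (Suc i)" using c_arr_g by blast
lemma decomp: "x \<in> C \<Longrightarrow> \<exists>N ms. (\<forall>i<N. ms i \<in> G i) \<and> x = lsum M ms [0..<N]"
  using c_decomp by blast
lemma dsum: "(\<forall>i<N. ms i \<in> G i) \<Longrightarrow> lsum M ms [0..<N] = z \<Longrightarrow> i < N \<Longrightarrow> ms i = z"
  using c_dsum by blast

lemma ad_cancel: assumes "x \<in> C" "y \<in> C" "w \<in> C" "ad w x = ad w y" shows "x = y"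
proof -
  have "x = ad (ad (sm (-1) w) w) x" using assms ad_neg[of w] ad_comm[of w "sm (-1) w"] by simp
  also have "... = ad (sm (-1) w) (ad w x)" using assms by (simp add: ad_assoc)
  also have "... = ad (sm (-1) w) (ad w y)" using assms by simp
  also have "... = ad (ad (sm (-1) w) w) y" using assms by (simp add: ad_assoc)
  also have "... = y" using assms ad_neg[of w] ad_comm[of w "sm (-1) w"] by simp
  finally show ?thesis .
qed

lemma sm_zero[simp]: assumes "x \<in> C" shows "sm 0 x = z"
proof -
  have "ad (sm 0 x) (sm 0 x) = ad (sm 0 x) z" using ad_sm[of x 0 0] assms by simp
  thus ?thesis using ad_cancel[of "sm 0 x" z "sm 0 x"] assms by simp
qed

lemma sm_z[simp]: "sm c z = z"
  using sm_sm[OF z_in, of c 0] by simp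


lemma idem_z[simp]: "midem M v z = z"
  using idem_sm[OF z_in, of v 0] by simp


lemma arr_z[simp]: "marr M a z = z"
  using arr_sm[OF z_in, of a 0] by simp


lemma sm_eq_z: assumes "x \<in> C" "sm c x = z" "c \<noteq> 0" shows "x = z"
proof -
  have "sm (inverse c * c) x = sm (inverse c) (sm c x)" by (rule sm_sm[OF assms(1)])
  hence "sm (inverse c * c) x = z" using assms by simp
  moreover have "inverse c * c = 1" using assms by simp
  ultimately show ?thesis using assms(1) by simp
qed


lemma sm_cancel: assumes "x \<in> C" "x \<noteq> z" "sm c x = sm d x" shows "c = d"
proof (rule ccontr)
  assume ne: "c \<noteq> d"
  have "sm (c - d) x = ad (sm c x) (sm (- d) x)" using ad_sm[of x c "-d"] assms by simp
  also have "... = ad (sm d x) (sm (-1) (sm d x))" using assms by (simp add: sm_sm[symmetric])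
  also have "... = z" using assms ad_neg by simp
  finally show False using sm_eq_z[of x "c - d"] assms ne by simp
qed

lemma ad4: "a \<in> C \<Longrightarrow> b \<in> C \<Longrightarrow> c \<in> C \<Longrightarrow> d \<in> C \<Longrightarrow> ad (ad a b) (ad c d) = ad (ad a c) (ad b d)"
  by (metis ad_assoc ad_comm ad_in)

lemma lsum_Nil[simp]: "lsum M f [] = z" by (simp add: lsum_def)
lemma lsum_Cons[simp]: "lsum M f (x # xs) = ad (f x) (lsum M f xs)" by (simp add: lsum_def)

lemma lsum_in: "(\<And>x. x \<in> set xs \<Longrightarrow> f x \<in> C) \<Longrightarrow> lsum M f xs \<in> C"
  by (induction xs) auto

lemma lsum_append: "(\<And>x. x \<in> set (xs @ ys) \<Longrightarrow> f x \<in> C) \<Longrightarrow> lsum M f (xs @ ys) = ad (lsum M f xs) (lsum M f ys)"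
proof (induction xs)
  case Nil thus ?case by (simp add: lsum_in)
next
  case (Cons a xs) thus ?case by (simp add: ad_assoc lsum_in)
qed

lemma lsum_add: "(\<And>x. x \<in> set xs \<Longrightarrow> f x \<in> C) \<Longrightarrow> (\<And>x. x \<in> set xs \<Longrightarrow> g x \<in> C) \<Longrightarrow>
   lsum M (\<lambda>x. ad (f x) (g x)) xs = ad (lsum M f xs) (lsum M g xs)"
  by (induction xs) (auto simp: ad4 lsum_in)

lemma lsum_sm: "(\<And>x. x \<in> set xs \<Longrightarrow> f x \<in> C) \<Longrightarrow> lsum M (\<lambda>x. sm c (f x)) xs = sm c (lsum M f xs)"
  by (induction xs) (auto simp: sm_ad lsum_in)

lemma lsum_arr: "(\<And>x. x \<in> set xs \<Longrightarrow> f x \<in> C) \<Longrightarrow> marr M a (lsum M f xs) = lsum M (\<lambda>x. marr M a (f x)) xs"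
  by (induction xs) (auto simp: arr_ad lsum_in)

lemma lsum_idem: "(\<And>x. x \<in> set xs \<Longrightarrow> f x \<in> C) \<Longrightarrow> midem M v (lsum M f xs) = lsum M (\<lambda>x. midem M v (f x)) xs"
  by (induction xs) (auto simp: idem_ad lsum_in)

lemma lsum_cong: "(\<And>x. x \<in> set xs \<Longrightarrow> f x = g x) \<Longrightarrow> lsum M f xs = lsum M g xs"
  by (induction xs) auto

lemma lsum_map: "lsum M f (map h xs) = lsum M (\<lambda>x. f (h x)) xs"
  by (induction xs) auto

lemma path_act_in[simp]: "x \<in> C \<Longrightarrow> path_act M v p x \<in> C"
proof (induction p rule: rev_induct)
  case Nil thus ?case by (simp add: path_act_def)
next
  case (snoc a p) thus ?case by (simp add: path_act_def)
qed

lemma path_act_snoc: "path_act M v (p @ [a]) x = marr M a (path_act M v p x)"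
  by (simp add: path_act_def)

lemma path_act_Nil: "path_act M v [] x = midem M v x"
  by (simp add: path_act_def)

lemma path_act_G: "x \<in> G i \<Longrightarrow> path_act M v p x \<in> G (i + length p)"
proof (induction p rule: rev_induct)
  case Nil thus ?case by (simp add: path_act_def idem_G)
next
  case (snoc a p) thus ?case by (simp add: path_act_snoc arr_G)
qed

lemma path_act_z[simp]: "path_act M v p z = z"
  by (induction p rule: rev_induct) (auto simp: path_act_snoc path_act_Nil)

end


locale pb = gm src tgt M for src tgt :: "'e::finite \<Rightarrow> 'v::finite" and M :: "('k::field, 'v, 'e, 'm) qmod" +
  fixes b :: "nat \<Rightarrow> 'm"
  assumes b_G: "b i \<in> G i" and b_nz: "b i \<noteq> z" and b_span: "y \<in> G i \<Longrightarrow> \<exists>c. y = sm c (b i)"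
begin

lemma b_C[simp]: "b i \<in> C" using b_G G_C by blast

definition LC :: "(nat \<Rightarrow> 'k) \<Rightarrow> nat \<Rightarrow> 'm" where
  "LC h N = lsum M (\<lambda>i. sm (h i) (b i)) [0..<N]"

lemma LC_in[simp]: "LC h N \<in> C" unfolding LC_def by (rule lsum_in) simp

lemma LC_0[simp]: "LC h 0 = z" by (simp add: LC_def)

lemma LC_Suc: "LC h (Suc N) = ad (LC h N) (sm (h N) (b N))"
  unfolding LC_def by (simp add: lsum_append)

lemma LC_ext: assumes "\<And>i. i \<ge> N \<Longrightarrow> h i = 0" "N \<le> N'" shows "LC h N' = LC h N"
  using assms(2)
proof (induction N' rule: dec_induct)
  case base thus ?case by simp
next
  case (step k) thus ?case by (simp add: LC_Suc assms(1))
qed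

lemma LC_add: "LC (\<lambda>i. h i + g i) N = ad (LC h N) (LC g N)"
  unfolding LC_def by (subst lsum_add[symmetric]) (auto intro!: lsum_cong simp: ad_sm)

lemma LC_sm: "LC (\<lambda>i. c * h i) N = sm c (LC h N)"
  unfolding LC_def by (subst lsum_sm[symmetric]) (auto intro!: lsum_cong simp: sm_sm)

lemma LC_zero: "LC (\<lambda>i. 0) N = z"
  using LC_ext[of 0 "\<lambda>i. 0" N] by simp

lemma sm_b_eq_z: "sm c (b i) = z \<Longrightarrow> c = 0"
  using sm_eq_z[of "b i" c] b_nz by auto

lemma LC_z_imp: assumes "LC h N = z" "i < N" shows "h i = 0"
proof -
  have "sm (h i) (b i) = z"
    using dsum[of N "\<lambda>i. sm (h i) (b i)" i] assms b_G sm_G unfolding LC_def by blast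
  thus ?thesis by (rule sm_b_eq_z)
qed

lemma LC_unique:
  assumes "\<And>i. i \<ge> N \<Longrightarrow> h i = 0" "\<And>i. i \<ge> N' \<Longrightarrow> g i = 0" "LC h N = LC g N'"
  shows "h = g"
proof
  fix i
  define K where "K = max N N'"
  have h: "LC h K = LC h N" using assms(1) LC_ext[of N h K] K_def by simp
  have g: "LC g K = LC g N'" using assms(2) LC_ext[of N' g K] K_def by simp
  have "LC (\<lambda>i. h i + (-1) * g i) K = ad (LC h K) (sm (-1) (LC g K))"
    by (simp only: LC_add LC_sm)
  also have "... = z" using h g assms ad_neg by simp
  finally have Z: "LC (\<lambda>i. h i + (-1) * g i) K = z" .
  show "h i = g i"
  proof (cases "i < K")
    case True thus ?thesis using LC_z_imp[OF Z True] by simp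
  next
    case False thus ?thesis using assms K_def by simp
  qed
qed

lemma LC_exists: assumes "x \<in> C" shows "\<exists>h N. (\<forall>i\<ge>N. h i = 0) \<and> x = LC h N"
proof -
  obtain N ms where ms: "\<forall>i<N. ms i \<in> G i" "x = lsum M ms [0..<N]" using decomp[OF assms] by blast
  have "\<forall>i. \<exists>c. i < N \<longrightarrow> ms i = sm c (b i)" using ms b_span by blast
  then obtain c where c: "\<And>i. i < N \<Longrightarrow> ms i = sm (c i) (b i)" by metis
  define h where "h i = (if i < N then c i else 0)" for i
  have "x = LC h N" unfolding LC_def ms(2) h_def by (rule lsum_cong) (simp add: c)
  moreover have "\<forall>i\<ge>N. h i = 0" unfolding h_def by simp
  ultimately show ?thesis by blast
qed

definition kap :: "'m \<Rightarrow> nat \<Rightarrow> 'k" where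
  "kap x = (THE h. \<exists>N. (\<forall>i\<ge>N. h i = 0) \<and> x = LC h N)"

lemma kap_LC: assumes "\<And>i. i \<ge> N \<Longrightarrow> h i = 0" shows "kap (LC h N) = h"
  unfolding kap_def
proof (rule the_equality)
  show "\<exists>N'. (\<forall>i\<ge>N'. h i = 0) \<and> LC h N = LC h N'" using assms by blast
next
  fix g assume "\<exists>N'. (\<forall>i\<ge>N'. g i = 0) \<and> LC h N = LC g N'"
  thus "g = h" using LC_unique[of N h] assms by metis
qed

lemma kap_spec: assumes "x \<in> C" shows "\<exists>N. (\<forall>i\<ge>N. kap x i = 0) \<and> x = LC (kap x) N"
proof -
  obtain h N where "\<forall>i\<ge>N. h i = 0" "x = LC h N" using LC_exists[OF assms] by blast
  thus ?thesis using kap_LC[of N h] by auto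
qed

lemma kap_eq_z: assumes "x \<in> C" "\<And>i. kap x i = 0" shows "x = z"
proof -
  obtain N where "x = LC (kap x) N" using kap_spec[OF assms(1)] by blast
  moreover have "kap x = (\<lambda>i. 0)" using assms(2) by auto
  ultimately show ?thesis using LC_zero by simp
qed

lemma kap_z[simp]: "kap z i = 0"
  using kap_LC[of 0 "\<lambda>i. 0"] by simp

lemma kap_add: assumes "x \<in> C" "y \<in> C" shows "kap (ad x y) i = kap x i + kap y i"
proof -
  obtain N where N: "\<forall>i\<ge>N. kap x i = 0" "x = LC (kap x) N" using kap_spec[OF assms(1)] by blast
  obtain N' where N': "\<forall>i\<ge>N'. kap y i = 0" "y = LC (kap y) N'" using kap_spec[OF assms(2)] by blast
  define K where "K = max N N'"
  have "x = LC (kap x) K" "y = LC (kap y) K" using N N' LC_ext[of N "kap x" K] LC_ext[of N' "kap y" K] K_def by auto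
  hence "ad x y = LC (\<lambda>i. kap x i + kap y i) K" by (simp add: LC_add)
  moreover have "\<forall>i\<ge>K. kap x i + kap y i = 0" using N N' K_def by simp
  ultimately show ?thesis using kap_LC[of K "\<lambda>i. kap x i + kap y i"] by simp
qed

lemma kap_sm: assumes "x \<in> C" shows "kap (sm c x) i = c * kap x i"
proof -
  obtain N where N: "\<forall>i\<ge>N. kap x i = 0" "x = LC (kap x) N" using kap_spec[OF assms(1)] by blast
  hence "sm c x = LC (\<lambda>i. c * kap x i) N" by (simp add: LC_sm)
  thus ?thesis using kap_LC[of N "\<lambda>i. c * kap x i"] N by simp
qed

lemma kap_b: "kap (b i) j = (if j = i then 1 else 0)"
proof -
  have "LC (\<lambda>j. if j = i then 1 else 0) (Suc i) = ad (LC (\<lambda>j. if j = i then 1 else 0) i) (b i)"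
    by (simp add: LC_Suc)
  also have "LC (\<lambda>j. if j = i then 1 else 0) i = LC (\<lambda>j. 0) i"
    unfolding LC_def by (rule lsum_cong) simp
  finally have "LC (\<lambda>j. if j = i then 1 else 0) (Suc i) = b i" by (simp add: LC_zero)
  thus ?thesis using kap_LC[of "Suc i" "\<lambda>j. if j = i then 1 else 0"] by auto
qed

lemma kap_smb: "kap (sm c (b i)) j = (if j = i then c else 0)"
  by (simp add: kap_sm kap_b)

lemma kap_G: assumes "y \<in> G i" "j \<noteq> i" shows "kap y j = 0"
  using b_span[OF assms(1)] assms(2) kap_smb by auto

lemma kap_fin: assumes "x \<in> C" shows "\<exists>N. \<forall>i\<ge>N. kap x i = 0"
  using kap_spec[OF assms] by blast

definition dd :: "nat \<Rightarrow> 'e \<Rightarrow> 'k" where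
  "dd i a = (SOME c. marr M a (b i) = sm c (b (Suc i)))"

lemma dd: "marr M a (b i) = sm (dd i a) (b (Suc i))"
proof -
  have "\<exists>c. marr M a (b i) = sm c (b (Suc i))" using b_span arr_G b_G by blast
  thus ?thesis unfolding dd_def by (rule someI_ex)
qed

definition ee :: "nat \<Rightarrow> 'v \<Rightarrow> 'k" where
  "ee i w = (SOME c. midem M w (b i) = sm c (b i))"

lemma ee: "midem M w (b i) = sm (ee i w) (b i)"
proof -
  have "\<exists>c. midem M w (b i) = sm c (b i)" using b_span idem_G b_G by blast
  thus ?thesis unfolding ee_def by (rule someI_ex)
qed

lemma LC_Suc_shift: "LC h (Suc N) = ad (sm (h 0) (b 0)) (lsum M (\<lambda>i. sm (h (Suc i)) (b (Suc i))) [0..<N])"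
proof -
  have "[0..<Suc N] = 0 # map Suc [0..<N]" by (simp add: upt_conv_Cons map_Suc_upt)
  thus ?thesis unfolding LC_def by (simp add: lsum_map)
qed

lemma kap_arr: assumes "x \<in> C"
  shows "kap (marr M a x) j = (case j of 0 \<Rightarrow> 0 | Suc i \<Rightarrow> dd i a * kap x i)"
proof -
  obtain N where N: "\<forall>i\<ge>N. kap x i = 0" "x = LC (kap x) N" using kap_spec[OF assms(1)] by blast
  define h where "h j = (case j of 0 \<Rightarrow> 0 | Suc i \<Rightarrow> dd i a * kap x i)" for j
  have "marr M a x = marr M a (lsum M (\<lambda>i. sm (kap x i) (b i)) [0..<N])"
    using arg_cong[OF N(2), of "marr M a"] unfolding LC_def .
  also have "... = lsum M (\<lambda>i. marr M a (sm (kap x i) (b i))) [0..<N]"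
    by (rule lsum_arr) simp
  also have "... = lsum M (\<lambda>i. sm (h (Suc i)) (b (Suc i))) [0..<N]"
    by (rule lsum_cong) (simp add: h_def arr_sm dd sm_sm[symmetric] mult.commute)
  also have "... = LC h (Suc N)" by (simp add: LC_Suc_shift h_def lsum_in)
  finally have "marr M a x = LC h (Suc N)" .
  moreover have "\<forall>i\<ge>Suc N. h i = 0" using N(1) unfolding h_def by (auto split: nat.splits)
  ultimately show ?thesis using kap_LC[of "Suc N" h] h_def by simp
qed

lemma kap_idem: assumes "x \<in> C"
  shows "kap (midem M w x) j = ee j w * kap x j"
proof -
  obtain N where N: "\<forall>i\<ge>N. kap x i = 0" "x = LC (kap x) N" using kap_spec[OF assms(1)] by blast
  have "midem M w x = midem M w (lsum M (\<lambda>i. sm (kap x i) (b i)) [0..<N])"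
    using arg_cong[OF N(2), of "midem M w"] unfolding LC_def .
  also have "... = lsum M (\<lambda>i. midem M w (sm (kap x i) (b i))) [0..<N]"
    by (rule lsum_idem) simp
  also have "... = LC (\<lambda>i. ee i w * kap x i) N" unfolding LC_def
    by (rule lsum_cong) (simp add: idem_sm ee sm_sm[symmetric] mult.commute)
  finally have "midem M w x = LC (\<lambda>i. ee i w * kap x i) N" .
  thus ?thesis using kap_LC[of N "\<lambda>i. ee i w * kap x i"] N(1) by simp
qed

lemma kap_path_low: assumes "x \<in> C" "j < length p" shows "kap (path_act M v p x) j = 0"
  using assms(2)
proof (induction p arbitrary: j rule: rev_induct)
  case Nil thus ?case by simp
next
  case (snoc a p)
  show ?case
  proof (cases j)
    case 0 thus ?thesis by (simp add: path_act_snoc kap_arr assms(1))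
  next
    case (Suc i)
    hence "i < length p" using snoc.prems by simp
    thus ?thesis using snoc.IH Suc by (simp add: path_act_snoc kap_arr assms(1))
  qed
qed

lemma ee_01: "ee i w = 0 \<or> ee i w = 1"
proof -
  have "midem M w (midem M w (b i)) = midem M w (b i)" using idem_idem by simp
  hence "sm (ee i w * ee i w) (b i) = sm (ee i w) (b i)" by (simp add: ee idem_sm sm_sm)
  hence "ee i w * ee i w = ee i w" using sm_cancel[OF b_C b_nz] by blast
  thus ?thesis by (metis mult_cancel_left1 mult_zero_left)
qed

lemma dd_src: assumes "dd i a \<noteq> 0" shows "ee i (src a) = 1"
proof -
  have "marr M a (midem M (src a) (b i)) = marr M a (b i)" using arr_src by simp
  hence "sm (ee i (src a) * dd i a) (b (Suc i)) = sm (dd i a) (b (Suc i))"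
    by (simp add: ee arr_sm dd sm_sm)
  hence "ee i (src a) * dd i a = dd i a" using sm_cancel[OF b_C b_nz] by blast
  thus ?thesis using assms by simp
qed

lemma dd_tgt: assumes "dd i a \<noteq> 0" shows "ee (Suc i) (tgt a) = 1"
proof -
  have "midem M (tgt a) (marr M a (b i)) = marr M a (b i)" using tgt_arr by simp
  hence "sm (dd i a * ee (Suc i) (tgt a)) (b (Suc i)) = sm (dd i a) (b (Suc i))"
    by (simp add: ee idem_sm dd sm_sm)
  hence "dd i a * ee (Suc i) (tgt a) = dd i a" using sm_cancel[OF b_C b_nz] by blast
  thus ?thesis using assms by simp
qed

lemma ee_uniq: assumes "ee i w = 1" "ee i w' = 1" shows "w = w'"
proof (rule ccontr)
  assume "w \<noteq> w'"
  hence "midem M w (midem M w' (b i)) = z" using idem_idem by simp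
  hence "b i = z" using assms by (simp add: ee)
  thus False using b_nz by simp
qed

lemma ee_other: assumes "ee i w = 1" "w' \<noteq> w" shows "ee i w' = 0"
proof -
  have "midem M w' (midem M w (b i)) = z" using idem_idem assms by simp
  hence "sm (ee i w') (b i) = z" using assms by (simp add: ee)
  thus ?thesis by (rule sm_b_eq_z)
qed

lemma dd_exists:
  assumes gen: "\<forall>x\<in>C. \<exists>ts. (\<forall>(y, v, p)\<in>set ts. y \<in> G 0 \<and> pathfrom src tgt v p) \<and>
                        x = lsum M (\<lambda>(y, v, p). path_act M v p y) ts"
  shows "\<exists>a. dd i a \<noteq> 0"
proof (rule ccontr)
  assume "\<not> (\<exists>a. dd i a \<noteq> 0)"
  hence d0: "\<And>a. dd i a = 0" by simp
  have t0: "kap (path_act M v p y) (Suc i) = 0" if "y \<in> G 0" for y v p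
  proof (cases "p = []")
    case True thus ?thesis using kap_G[OF idem_G[OF that]] by (simp add: path_act_Nil)
  next
    case False
    then obtain p' a where p: "p = p' @ [a]" by (metis rev_exhaust)
    have y: "y \<in> C" using that G_C by blast
    have ing: "path_act M v p' y \<in> G (length p')" using path_act_G[OF that] by simp
    show ?thesis
    proof (cases "length p' = i")
      case True
      thus ?thesis using p y d0 by (simp add: path_act_snoc kap_arr)
    next
      case False
      thus ?thesis using p y kap_G[OF ing] by (simp add: path_act_snoc kap_arr)
    qed
  qed
  obtain ts where ts: "\<forall>(y, v, p)\<in>set ts. y \<in> G 0 \<and> pathfrom src tgt v p"
     "b (Suc i) = lsum M (\<lambda>(y, v, p). path_act M v p y) ts" using gen b_C by blast
  have "kap (lsum M (\<lambda>(y, v, p). path_act M v p y) ts) (Suc i) = 0" using ts(1)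
  proof (induction ts)
    case Nil thus ?case by simp
  next
    case (Cons t ts)
    obtain y v p where t: "t = (y, v, p)" by (cases t) auto
    have y: "y \<in> G 0" using Cons.prems t by auto
    hence yc: "y \<in> C" using G_C by blast
    have "lsum M (\<lambda>(y, v, p). path_act M v p y) ts \<in> C"
      using Cons.prems by (intro lsum_in) (auto intro!: path_act_in intro: G_C)
    thus ?case using Cons t y yc t0 by (simp add: kap_add)
  qed
  moreover have "kap (b (Suc i)) (Suc i) = 1" by (simp add: kap_b)
  ultimately show False using ts(2) by (metis zero_neq_one)
qed

end


locale cycset =
  fixes src tgt :: "'e::finite \<Rightarrow> 'v::finite" and \<sigma> :: "nat \<Rightarrow> 'e" and n :: nat
  assumes n0: "0 < n" and per: "\<And>j. \<sigma> (j + n) = \<sigma> j"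
    and cons: "\<And>j. tgt (\<sigma> j) = src (\<sigma> (Suc j))"
begin

definition "v0 = src (\<sigma> 0)"
definition "cyc = map \<sigma> [0..<n]"
definition "\<gamma> k = map \<sigma> [0..<k]"

lemma per_m: "\<sigma> (j + m * n) = \<sigma> j"
proof (induction m)
  case (Suc m) thus ?case using per[of "j + m * n"] by (simp add: algebra_simps)
qed simp

lemma per_mod: "\<sigma> j = \<sigma> (j mod n)"
  using per_m[of "j mod n" "j div n"] by simp

lemma seg_path_d: "pathfrom src tgt (src (\<sigma> j)) (map \<sigma> [j..<j + d]) \<and> endv tgt (src (\<sigma> j)) (map \<sigma> [j..<j + d]) = src (\<sigma> (j + d))"
proof (induction d)
  case 0 thus ?case by simp
next
  case (Suc d)
  have e: "map \<sigma> [j..<j + Suc d] = map \<sigma> [j..<j + d] @ [\<sigma> (j + d)]" by simp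
  show ?case unfolding e using Suc cons[of "j + d"] by simp
qed

lemma seg_path: "j \<le> k \<Longrightarrow> pathfrom src tgt (src (\<sigma> j)) (map \<sigma> [j..<k]) \<and> endv tgt (src (\<sigma> j)) (map \<sigma> [j..<k]) = src (\<sigma> k)"
  using seg_path_d[of j "k - j"] by simp

lemma gamma_path: "pathfrom src tgt v0 (\<gamma> k)" and gamma_endv: "endv tgt v0 (\<gamma> k) = src (\<sigma> k)"
  using seg_path[of 0 k] unfolding v0_def \<gamma>_def by auto

lemma gamma_len[simp]: "length (\<gamma> k) = k" by (simp add: \<gamma>_def)

lemma gamma_Suc: "\<gamma> (Suc k) = \<gamma> k @ [\<sigma> k]" by (simp add: \<gamma>_def)

lemma gamma_nth: "t < k \<Longrightarrow> \<gamma> k ! t = \<sigma> t" by (simp add: \<gamma>_def)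

lemma gamma_add: "\<gamma> (n * m + i) = \<gamma> (n * m) @ \<gamma> i"
proof -
  have "[0..<n * m + i] = [0..<n * m] @ [n * m..<n * m + i]" by (rule upt_add_eq_append) simp
  moreover have "map \<sigma> [n * m..<n * m + i] = map \<sigma> [0..<i]"
  proof (rule nth_equalityI)
    fix t assume "t < length (map \<sigma> [n * m..<n * m + i])"
    hence t: "t < i" by simp
    have "map \<sigma> [n * m..<n * m + i] ! t = \<sigma> (n * m + t)" using t by simp
    also have "n * m + t = t + m * n" by simp
    also have "\<sigma> (t + m * n) = \<sigma> t" by (rule per_m)
    finally show "map \<sigma> [n * m..<n * m + i] ! t = map \<sigma> [0..<i] ! t" using t by simp
  qed simp
  ultimately show ?thesis unfolding \<gamma>_def by simp
qed

lemma gamma_rep: "\<gamma> (n * m) = concat (replicate m cyc)"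
proof (induction m)
  case 0 thus ?case by (simp add: \<gamma>_def)
next
  case (Suc m)
  have "\<gamma> (n * Suc m) = \<gamma> (n * m) @ \<gamma> n" using gamma_add[of m n] by (simp add: add.commute)
  also have "... = concat (replicate m cyc) @ cyc" using Suc by (simp add: \<gamma>_def cyc_def)
  also have "... = concat (replicate (Suc m) cyc)"
  proof -
    have "replicate (Suc m) cyc = replicate m cyc @ [cyc]" by (simp add: replicate_append_same)
    thus ?thesis by simp
  qed
  finally show ?case .
qed

lemma len_cyc[simp]: "length cyc = n" by (simp add: cyc_def)

lemma len_rep: "length (concat (replicate m cyc)) = m * n"
  by (induction m) auto

lemma cyc_nth: "i < n \<Longrightarrow> cyc ! i = \<sigma> i" by (simp add: cyc_def)

lemma take_cyc: "i \<le> n \<Longrightarrow> take i cyc = \<gamma> i" by (simp add: cyc_def \<gamma>_def take_map)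

lemma G1: assumes "pathfrom src tgt v0 q" shows "q = \<gamma> (length q) \<or> off_cycle src cyc q"
proof (cases "q = \<gamma> (length q)")
  case True thus ?thesis by simp
next
  case False
  have "\<exists>j. j < length q \<and> q ! j \<noteq> \<sigma> j"
  proof (rule ccontr)
    assume "\<not> ?thesis"
    hence "q = \<gamma> (length q)" by (intro nth_equalityI) (auto simp: gamma_nth)
    thus False using False by simp
  qed
  then obtain j where j: "j < length q" "q ! j \<noteq> \<sigma> j" and jmin: "\<And>k. k < j \<Longrightarrow> \<not> (k < length q \<and> q ! k \<noteq> \<sigma> k)"
    using exists_least_iff[of "\<lambda>j. j < length q \<and> q ! j \<noteq> \<sigma> j"] by blast
  have tk: "take j q = \<gamma> j" using j jmin by (intro nth_equalityI) (auto simp: gamma_nth)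
  have srcq: "src (q ! j) = src (\<sigma> j)" using pathfrom_nth_src[OF assms j(1)] tk gamma_endv by simp
  define m where "m = j div n"
  define i where "i = j mod n"
  have ji: "j = n * m + i" unfolding m_def i_def by simp
  have i: "i < n" unfolding i_def using n0 by simp
  have si: "\<sigma> j = \<sigma> i" using per_mod i_def by simp
  have q1: "q = take j q @ [q ! j] @ drop (Suc j) q" using id_take_nth_drop[OF j(1)] by simp
  have tj: "take j q = concat (replicate m cyc) @ take i cyc"
    using tk gamma_add[of m i] gamma_rep[of m] take_cyc[of i] i ji by simp
  have A: "q = concat (replicate m cyc) @ take i cyc @ [q ! j] @ drop (Suc j) q"
    using q1 unfolding tj append_assoc .
  have B: "q ! j \<noteq> cyc ! i" using j(2) si cyc_nth[OF i] by simp
  have Cc: "src (q ! j) = src (cyc ! i)" using srcq si cyc_nth[OF i] by simp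
  have "off_cycle src cyc q" unfolding off_cycle_def
    apply (rule exI[where x=m], rule exI[where x=i], rule exI[where x="q ! j"], rule exI[where x="drop (Suc j) q"])
    apply (intro conjI)
       apply (simp add: i)
      apply (rule B)
     apply (rule Cc)
    apply (rule A)
    done
  thus ?thesis by blast
qed

lemma G2: "\<not> off_cycle src cyc (\<gamma> k)"
proof
  assume "off_cycle src cyc (\<gamma> k)"
  then obtain m i b r where mi: "i < length cyc" "b \<noteq> cyc ! i"
    and e: "\<gamma> k = concat (replicate m cyc) @ take i cyc @ [b] @ r"
    unfolding off_cycle_def by blast
  have i: "i < n" using mi by simp
  define t where "t = m * n + i"
  have lt: "length (concat (replicate m cyc) @ take i cyc) = t" using i len_rep t_def by simp
  have "t < k" using arg_cong[OF e, of length] lt by simp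
  hence "\<gamma> k ! t = \<sigma> t" by (rule gamma_nth)
  also have "\<sigma> t = \<sigma> i" using per_m[of i m] t_def by (simp add: add.commute)
  finally have A: "\<gamma> k ! t = cyc ! i" using cyc_nth[OF i] by simp
  have e2: "\<gamma> k = (concat (replicate m cyc) @ take i cyc) @ b # r" using e by simp
  have "\<gamma> k ! t = b" unfolding e2 lt[symmetric] by (rule nth_append_length)
  thus False using A mi by simp
qed

lemma gamma_inj: "\<gamma> j = \<gamma> k \<Longrightarrow> j = k" using gamma_len by metis

end


locale cyck = cycset src tgt \<sigma> n for src tgt :: "'e::finite \<Rightarrow> 'v::finite" and \<sigma> :: "nat \<Rightarrow> 'e" and n :: nat +
  fixes kdummy :: "'k::field"
begin

abbreviation PM :: "('k, 'v, 'e, 'e list \<Rightarrow> 'k) qmod" where "PM \<equiv> path_mod src tgt v0"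
abbreviation UU :: "('e list \<Rightarrow> 'k) set" where "UU \<equiv> off_submod src tgt v0 cyc"
abbreviation OM :: "('k, 'v, 'e, ('e list \<Rightarrow> 'k) set) qmod" where "OM \<equiv> O_mod src tgt v0 cyc"
abbreviation cs :: "('e list \<Rightarrow> 'k) \<Rightarrow> ('e list \<Rightarrow> 'k) set" where "cs c \<equiv> coset PM UU c"

definition PC :: "('e list \<Rightarrow> 'k) set" where
  "PC = {c. finite {q. c q \<noteq> 0} \<and> (\<forall>q. c q \<noteq> 0 \<longrightarrow> pathfrom src tgt v0 q)}"

lemma PM_carr: "mcarr PM = PC" by (simp add: path_mod_def PC_def)
lemma PM_zero: "mzero PM = (\<lambda>q. 0)" by (simp add: path_mod_def)
lemma PM_add: "madd PM c d = (\<lambda>q. c q + d q)" by (simp add: path_mod_def)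
lemma PM_sm: "msmul PM s c = (\<lambda>q. s * c q)" by (simp add: path_mod_def)
lemma PM_idem: "midem PM w c = (\<lambda>q. if endv tgt v0 q = w then c q else 0)" by (simp add: path_mod_def)
lemma PM_arr: "marr PM a c = (\<lambda>q. if q \<noteq> [] \<and> last q = a \<and> pathfrom src tgt v0 q then c (butlast q) else 0)"
  by (simp add: path_mod_def)
lemma PM_gr: "mgr PM i = {c \<in> PC. \<forall>q. length q \<noteq> i \<longrightarrow> c q = 0}" by (simp add: path_mod_def PC_def)

lemmas PM_simps = PM_carr PM_zero PM_add PM_sm PM_idem PM_arr

lemma PC_zero[simp]: "(\<lambda>q. 0) \<in> PC" by (simp add: PC_def)

lemma PC_add[simp]: "c \<in> PC \<Longrightarrow> d \<in> PC \<Longrightarrow> (\<lambda>q. c q + d q) \<in> PC"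
proof -
  assume c: "c \<in> PC" and d: "d \<in> PC"
  have "{q. c q + d q \<noteq> 0} \<subseteq> {q. c q \<noteq> 0} \<union> {q. d q \<noteq> 0}" by auto
  moreover have "finite ({q. c q \<noteq> 0} \<union> {q. d q \<noteq> 0})" using c d by (simp add: PC_def)
  ultimately have "finite {q. c q + d q \<noteq> 0}" by (rule finite_subset)
  moreover have "\<forall>q. c q + d q \<noteq> 0 \<longrightarrow> pathfrom src tgt v0 q" using c d unfolding PC_def
    by (metis (mono_tags, lifting) add.right_neutral add_0 mem_Collect_eq)
  ultimately show ?thesis by (simp add: PC_def)
qed

lemma PC_sm[simp]: "c \<in> PC \<Longrightarrow> (\<lambda>q. s * c q) \<in> PC"
proof -
  assume c: "c \<in> PC"
  have "{q. s * c q \<noteq> 0} \<subseteq> {q. c q \<noteq> 0}" by auto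
  hence "finite {q. s * c q \<noteq> 0}" using c by (auto simp: PC_def intro: finite_subset)
  thus ?thesis using c by (simp add: PC_def)
qed

lemma PC_neg[simp]: "c \<in> PC \<Longrightarrow> (\<lambda>q. - c q) \<in> PC"
  using PC_sm[of c "-1"] by simp

lemma PC_diff[simp]: "c \<in> PC \<Longrightarrow> d \<in> PC \<Longrightarrow> (\<lambda>q. c q - d q) \<in> PC"
  using PC_add[of c "\<lambda>q. - d q"] by simp

lemma PC_idem[simp]: "c \<in> PC \<Longrightarrow> (\<lambda>q. if endv tgt v0 q = w then c q else 0) \<in> PC"
proof -
  assume c: "c \<in> PC"
  have "{q. (if endv tgt v0 q = w then c q else 0) \<noteq> 0} \<subseteq> {q. c q \<noteq> 0}" by auto
  hence "finite {q. (if endv tgt v0 q = w then c q else 0) \<noteq> 0}" using c by (auto simp: PC_def intro: finite_subset)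
  thus ?thesis using c by (simp add: PC_def)
qed

lemma PC_arr[simp]: "c \<in> PC \<Longrightarrow> (\<lambda>q. if q \<noteq> [] \<and> last q = a \<and> pathfrom src tgt v0 q then c (butlast q) else 0) \<in> PC"
proof -
  assume c: "c \<in> PC"
  have "{q. (if q \<noteq> [] \<and> last q = a \<and> pathfrom src tgt v0 q then c (butlast q) else 0) \<noteq> 0}
      \<subseteq> (\<lambda>p. p @ [a]) ` {q. c q \<noteq> 0}"
  proof
    fix q assume "q \<in> {q. (if q \<noteq> [] \<and> last q = a \<and> pathfrom src tgt v0 q then c (butlast q) else 0) \<noteq> 0}"
    hence q: "q \<noteq> []" "last q = a" "c (butlast q) \<noteq> 0" by (auto split: if_splits)
    hence "q = butlast q @ [a]" by (metis append_butlast_last_id)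
    thus "q \<in> (\<lambda>p. p @ [a]) ` {q. c q \<noteq> 0}" using q by blast
  qed
  moreover have "finite ((\<lambda>p. p @ [a]) ` {q. c q \<noteq> 0})" using c by (simp add: PC_def)
  ultimately have "finite {q. (if q \<noteq> [] \<and> last q = a \<and> pathfrom src tgt v0 q then c (butlast q) else 0) \<noteq> 0}"
    by (rule finite_subset)
  thus ?thesis by (simp add: PC_def)
qed

lemma PC_idem'[simp]: "c \<in> PC \<Longrightarrow> midem PM w c \<in> PC" by (simp add: PM_idem)
lemma PC_arr'[simp]: "c \<in> PC \<Longrightarrow> marr PM a c \<in> PC" by (simp add: PM_arr)

lemma th_arr: "marr PM a c (\<gamma> j) = (case j of 0 \<Rightarrow> 0 | Suc i \<Rightarrow> if \<sigma> i = a then c (\<gamma> i) else 0)"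
proof (cases j)
  case 0 thus ?thesis by (simp add: PM_arr \<gamma>_def)
next
  case (Suc i)
  thus ?thesis using gamma_path[of "Suc i"] by (simp add: PM_arr gamma_Suc)
qed

lemma th_idem: "midem PM w c (\<gamma> j) = (if src (\<sigma> j) = w then c (\<gamma> j) else 0)"
  by (simp add: PM_idem gamma_endv)

lemma U_char: "c \<in> UU \<longleftrightarrow> c \<in> PC \<and> (\<forall>j. c (\<gamma> j) = 0)"
proof
  assume "c \<in> UU"
  hence c: "c \<in> PC" "\<And>q. c q \<noteq> 0 \<Longrightarrow> off_cycle src cyc q" unfolding off_submod_def PM_carr by auto
  thus "c \<in> PC \<and> (\<forall>j. c (\<gamma> j) = 0)" using G2 by blast
next
  assume c: "c \<in> PC \<and> (\<forall>j. c (\<gamma> j) = 0)"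
  have "off_cycle src cyc q" if "c q \<noteq> 0" for q
  proof -
    have "pathfrom src tgt v0 q" using c that by (simp add: PC_def)
    from G1[OF this] show ?thesis
    proof
      assume "q = \<gamma> (length q)"
      hence "c q = 0" using c by metis
      thus ?thesis using that by simp
    qed
  qed
  thus "c \<in> UU" using c unfolding off_submod_def PM_carr by auto
qed

lemma cs_eq: assumes "c \<in> PC" "d \<in> PC" "\<And>j. c (\<gamma> j) = d (\<gamma> j)" shows "cs c = cs d"
proof -
  have sub: "cs c \<subseteq> cs d" if "c \<in> PC" "d \<in> PC" "\<And>j. c (\<gamma> j) = d (\<gamma> j)" for c d :: "'e list \<Rightarrow> 'k"
  proof
    fix x assume "x \<in> cs c"
    then obtain u where u: "u \<in> UU" "x = (\<lambda>q. c q + u q)" unfolding coset_def PM_add by auto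
    have uc: "u \<in> PC" "\<And>j. u (\<gamma> j) = 0" using u U_char by auto
    define u' where "u' = (\<lambda>q. c q + (-1) * d q + u q)"
    have "u' \<in> PC" unfolding u'_def using that uc by simp
    moreover have "\<forall>j. u' (\<gamma> j) = 0" using that uc unfolding u'_def by simp
    ultimately have "u' \<in> UU" using U_char by blast
    moreover have "x = (\<lambda>q. d q + u' q)" unfolding u'_def u by (simp add: algebra_simps)
    ultimately show "x \<in> cs d" unfolding coset_def PM_add by blast
  qed
  show ?thesis using sub[of c d] sub[of d c] assms by (auto intro!: equalityI)
qed

lemma cs_mem: "c \<in> PC \<Longrightarrow> c \<in> cs c"
proof -
  assume "c \<in> PC"
  have "(\<lambda>q. 0) \<in> UU" using U_char by simp
  hence "\<exists>u. c = (\<lambda>q. c q + u q) \<and> u \<in> UU" by (intro exI[of _ "\<lambda>q. 0"]) simp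
  thus "c \<in> cs c" unfolding coset_def PM_add by blast
qed

lemma cs_elem: assumes "x \<in> cs c" "c \<in> PC" shows "x \<in> PC" "\<And>j. x (\<gamma> j) = c (\<gamma> j)"
proof -
  obtain u where u: "u \<in> UU" "x = (\<lambda>q. c q + u q)" using assms unfolding coset_def PM_add by auto
  have uc: "u \<in> PC" "\<And>j. u (\<gamma> j) = 0" using u U_char by auto
  show "x \<in> PC" using u uc assms by simp
  show "\<And>j. x (\<gamma> j) = c (\<gamma> j)" using u uc by simp
qed

lemma cs_eq_iff: assumes "c \<in> PC" "d \<in> PC" shows "cs c = cs d \<longleftrightarrow> (\<forall>j. c (\<gamma> j) = d (\<gamma> j))"
  using cs_eq[OF assms] cs_elem[OF _ assms(2)] cs_mem[OF assms(1)] by metis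

definition rp :: "('e list \<Rightarrow> 'k) set \<Rightarrow> ('e list \<Rightarrow> 'k)" where "rp X = (SOME x. x \<in> X)"

lemma rp: assumes "c \<in> PC" shows "rp (cs c) \<in> PC" "\<And>j. rp (cs c) (\<gamma> j) = c (\<gamma> j)"
proof -
  have "\<exists>x. x \<in> cs c" using cs_mem[OF assms] by blast
  hence "rp (cs c) \<in> cs c" unfolding rp_def by (rule someI_ex)
  thus "rp (cs c) \<in> PC" "\<And>j. rp (cs c) (\<gamma> j) = c (\<gamma> j)" using cs_elem assms by auto
qed

lemma OM_carr: "mcarr OM = cs ` PC" by (simp add: O_mod_def quot_mod_def PM_carr)
lemma OM_zero: "mzero OM = cs (\<lambda>q. 0)" by (simp add: O_mod_def quot_mod_def PM_zero)
lemma OM_gr: "mgr OM i = cs ` mgr PM i" by (simp add: O_mod_def quot_mod_def)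

lemma OM_add: assumes "c \<in> PC" "d \<in> PC" shows "madd OM (cs c) (cs d) = cs (\<lambda>q. c q + d q)"
proof -
  have "madd OM (cs c) (cs d) = cs (\<lambda>q. rp (cs c) q + rp (cs d) q)"
    by (simp add: O_mod_def quot_mod_def PM_add rp_def)
  also have "... = cs (\<lambda>q. c q + d q)" using rp[OF assms(1)] rp[OF assms(2)] assms
    by (intro cs_eq) auto
  finally show ?thesis .
qed

lemma OM_sm: assumes "c \<in> PC" shows "msmul OM s (cs c) = cs (\<lambda>q. s * c q)"
proof -
  have "msmul OM s (cs c) = cs (\<lambda>q. s * rp (cs c) q)"
    by (simp add: O_mod_def quot_mod_def PM_sm rp_def)
  also have "... = cs (\<lambda>q. s * c q)" using rp[OF assms(1)] assms
    by (intro cs_eq) auto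
  finally show ?thesis .
qed

lemma OM_idem: assumes "c \<in> PC" shows "midem OM w (cs c) = cs (midem PM w c)"
proof -
  have "midem OM w (cs c) = cs (midem PM w (rp (cs c)))"
    by (simp add: O_mod_def quot_mod_def rp_def)
  also have "... = cs (midem PM w c)" using rp[OF assms(1)] assms
    by (intro cs_eq) (auto simp: th_idem)
  finally show ?thesis .
qed

lemma OM_arr: assumes "c \<in> PC" shows "marr OM a (cs c) = cs (marr PM a c)"
proof -
  have "marr OM a (cs c) = cs (marr PM a (rp (cs c)))"
    by (simp add: O_mod_def quot_mod_def rp_def)
  also have "... = cs (marr PM a c)" using rp[OF assms(1)] assms
    by (intro cs_eq) (auto simp: th_arr split: nat.splits)
  finally show ?thesis .
qed

lemma PM_path_in: "c \<in> PC \<Longrightarrow> path_act PM w p c \<in> PC"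
  by (induction p rule: rev_induct) (auto simp: path_act_def)

lemma OM_path: assumes "c \<in> PC" shows "path_act OM w p (cs c) = cs (path_act PM w p c)"
  using assms
proof (induction p rule: rev_induct)
  case Nil thus ?case by (simp add: path_act_def OM_idem)
next
  case (snoc a p)
  have "path_act OM w (p @ [a]) (cs c) = marr OM a (path_act OM w p (cs c))" by (simp add: path_act_def)
  also have "... = cs (marr PM a (path_act PM w p c))" using snoc PM_path_in by (simp add: OM_arr)
  also have "... = cs (path_act PM w (p @ [a]) c)" by (simp add: path_act_def)
  finally show ?case .
qed

lemma PM_path_zero: "path_act PM w p (\<lambda>q. 0::'k) = (\<lambda>q. 0)"
  by (induction p rule: rev_induct) (auto simp: path_act_def PM_idem PM_arr)

lemma tors_zero: "cs (\<lambda>q. 0::'k) \<in> tors src tgt OM"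
  unfolding tors_def ann_ge_def
  by (auto simp: OM_carr OM_zero OM_path PM_path_zero)

lemma msub_tors: assumes "c \<in> PC" "d \<in> PC" "\<And>j. c (\<gamma> j) = d (\<gamma> j)"
  shows "msub OM (cs c) (cs d) \<in> tors src tgt OM"
proof -
  have e1: "msmul OM (-1) (cs d) = cs (\<lambda>q. (-1) * d q)" by (rule OM_sm[OF assms(2)])
  have e2: "madd OM (cs c) (cs (\<lambda>q. (-1) * d q)) = cs (\<lambda>q. c q + (-1) * d q)"
    by (rule OM_add) (simp_all add: assms)
  have "msub OM (cs c) (cs d) = cs (\<lambda>q. c q + (-1) * d q)"
    unfolding msub_def e1 e2 ..
  also have "... = cs (\<lambda>q. 0)" using assms by (intro cs_eq) auto
  finally show ?thesis using tors_zero by simp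
qed

lemma PM_path_supp: assumes "path_act PM w p c q \<noteq> 0" shows "length p \<le> length q"
  using assms
proof (induction p arbitrary: q rule: rev_induct)
  case Nil thus ?case by simp
next
  case (snoc a p)
  have "marr PM a (path_act PM w p c) q \<noteq> 0" using snoc.prems by (simp add: path_act_def)
  hence q: "q \<noteq> []" "path_act PM w p c (butlast q) \<noteq> 0" by (auto simp: PM_arr split: if_splits)
  have "length p \<le> length (butlast q)" using snoc.IH[OF q(2)] .
  moreover have "length (butlast q) = length q - 1" by simp
  ultimately show ?case using q(1) by (cases "length q") auto
qed

lemma PM_path_cycle: "(path_act PM (src (\<sigma> j)) (map \<sigma> [j..<j + m]) c) (\<gamma> (j + m)) = c (\<gamma> j)"
proof (induction m)
  case 0 thus ?case by (simp add: path_act_def th_idem)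
next
  case (Suc m)
  have "map \<sigma> [j..<j + Suc m] = map \<sigma> [j..<j + m] @ [\<sigma> (j + m)]" by simp
  hence "path_act PM (src (\<sigma> j)) (map \<sigma> [j..<j + Suc m]) c = marr PM (\<sigma> (j + m)) (path_act PM (src (\<sigma> j)) (map \<sigma> [j..<j + m]) c)"
    by (simp add: path_act_def)
  thus ?case using Suc by (simp add: th_arr)
qed

definition emb :: "(nat \<Rightarrow> 'k) \<Rightarrow> 'e list \<Rightarrow> 'k" where
  "emb h q = (if q = \<gamma> (length q) then h (length q) else 0)"

lemma emb_th[simp]: "emb h (\<gamma> j) = h j" by (simp add: emb_def)

lemma emb_PC: assumes "\<And>i. i \<ge> N \<Longrightarrow> h i = 0" shows "emb h \<in> PC"
proof -
  have "{q. emb h q \<noteq> 0} \<subseteq> \<gamma> ` {..<N}"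
  proof
    fix q assume "q \<in> {q. emb h q \<noteq> 0}"
    hence "q = \<gamma> (length q)" "h (length q) \<noteq> 0" by (auto simp: emb_def split: if_splits)
    thus "q \<in> \<gamma> ` {..<N}" using assms by (metis imageI lessThan_iff not_le)
  qed
  hence "finite {q. emb h q \<noteq> 0}" by (rule finite_subset) simp
  moreover have "\<forall>q. emb h q \<noteq> 0 \<longrightarrow> pathfrom src tgt v0 q"
    using gamma_path by (auto simp: emb_def split: if_splits) (metis gamma_path)
  ultimately show ?thesis by (simp add: PC_def)
qed

lemma emb_gr: assumes "\<And>i. i \<ge> N \<Longrightarrow> h i = 0" "\<And>j. j \<noteq> k \<Longrightarrow> h j = 0" shows "emb h \<in> mgr PM k"
  using emb_PC[OF assms(1)] assms(2) unfolding PM_gr by (auto simp: emb_def)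

lemma th_fin: assumes "c \<in> PC" shows "\<exists>N. \<forall>j\<ge>N. c (\<gamma> j) = 0"
proof -
  have "finite {q. c q \<noteq> 0}" using assms by (simp add: PC_def)
  hence "finite (length ` {q. c q \<noteq> 0})" by simp
  then obtain N where N: "\<forall>x\<in>length ` {q. c q \<noteq> 0}. x < N" by (meson finite_nat_set_iff_bounded)
  have "c (\<gamma> j) = 0" if "j \<ge> N" for j
  proof (rule ccontr)
    assume "c (\<gamma> j) \<noteq> 0"
    hence "length (\<gamma> j) < N" using N by blast
    thus False using that by simp
  qed
  thus ?thesis by blast
qed

end


lemma window_shift:
  assumes "0 < n" "f (i + n) = f i"
  shows "map (\<lambda>j. f (Suc i + j)) [0..<n] = rotate1 (map (\<lambda>j. f (i + j)) [0..<n])"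
proof (rule nth_equalityI)
  show "length (map (\<lambda>j. f (Suc i + j)) [0..<n]) = length (rotate1 (map (\<lambda>j. f (i + j)) [0..<n]))" by simp
next
  fix k assume "k < length (map (\<lambda>j. f (Suc i + j)) [0..<n])"
  hence k: "k < n" by simp
  have "rotate1 (map (\<lambda>j. f (i + j)) [0..<n]) ! k = map (\<lambda>j. f (i + j)) [0..<n] ! (Suc k mod n)"
    using k by (simp add: nth_rotate1)
  also have "... = f (i + Suc k mod n)" using assms(1) by simp
  also have "... = f (Suc i + k)"
  proof (cases "Suc k < n")
    case True thus ?thesis by simp
  next
    case False
    hence sk: "Suc k = n" using k by simp
    hence "Suc k mod n = 0" by simp
    hence "f (i + Suc k mod n) = f i" by simp
    also have "... = f (i + n)" using assms(2) by simp
    also have "i + n = Suc i + k" using sk by simp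
    finally show ?thesis .
  qed
  finally show "map (\<lambda>j. f (Suc i + j)) [0..<n] ! k = rotate1 (map (\<lambda>j. f (i + j)) [0..<n]) ! k"
    using k by simp
qed

lemma window_distinct:
  assumes "0 < n" "\<And>i. i \<ge> T \<Longrightarrow> f (i + n) = f i" "distinct (map (\<lambda>j. f (T + j)) [0..<n])"
  shows "distinct (map (\<lambda>j. f (T + s + j)) [0..<n])"
proof (induction s)
  case 0 thus ?case using assms(3) by simp
next
  case (Suc s)
  have "map (\<lambda>j. f (Suc (T + s) + j)) [0..<n] = rotate1 (map (\<lambda>j. f (T + s + j)) [0..<n])"
    by (rule window_shift) (use assms in auto)
  thus ?case using Suc by simp
qed

lemma per_from:
  fixes f :: "nat \<Rightarrow> 'a"
  assumes "\<And>i. i \<ge> T \<Longrightarrow> f (i + n) = f i" "i \<ge> T"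
  shows "f (i + m * n) = f i"
proof (induction m)
  case (Suc m)
  have "f (i + m * n + n) = f (i + m * n)" using assms by simp
  thus ?case using Suc by (simp add: algebra_simps)
qed simp


theorem proposition5p5:
  fixes src tgt :: "'e::finite \<Rightarrow> 'v::finite"
    and P :: "('k::field, 'v, 'e, 'm) qmod"
  assumes "gk_dim src tgt < \<infinity>"
    and "point_module src tgt P"
  shows "\<exists>v cyc. simple_cycle src tgt v cyc \<and>
           qgr_iso src tgt P (O_mod src tgt v cyc :: ('k, 'v, 'e, ('e list \<Rightarrow> 'k) set) qmod)"
proof -
  note gk = assms(1)
  have grm: "grmod src tgt P" using assms(2) unfolding point_module_def by blast
  have gen: "\<forall>x\<in>mcarr P. \<exists>ts. (\<forall>(y, v, p)\<in>set ts. y \<in> mgr P 0 \<and> pathfrom src tgt v p) \<and>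
                        x = lsum P (\<lambda>(y, v, p). path_act P v p y) ts"
    using assms(2) unfolding point_module_def by blast
  have pts: "\<forall>i. \<exists>x\<in>mgr P i. x \<noteq> mzero P \<and> (\<forall>y\<in>mgr P i. \<exists>c. y = msmul P c x)"
    using assms(2) unfolding point_module_def by blast
  interpret gm src tgt P by unfold_locales (rule grm)
  define xb where "xb i = (SOME x. x \<in> G i \<and> x \<noteq> z \<and> (\<forall>y\<in>G i. \<exists>c. y = sm c x))" for i
  have xb: "xb i \<in> G i \<and> xb i \<noteq> z \<and> (\<forall>y\<in>G i. \<exists>c. y = sm c (xb i))" for i
  proof -
    have "\<exists>x. x \<in> G i \<and> x \<noteq> z \<and> (\<forall>y\<in>G i. \<exists>c. y = sm c x)" using pts by blast
    thus ?thesis unfolding xb_def by (rule someI_ex)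
  qed
  interpret X: pb src tgt P xb by unfold_locales (use xb in blast)+
  obtain T n \<alpha> where n0: "0 < n" and act: "\<forall>i\<ge>T. \<forall>a. X.dd i a \<noteq> 0 \<longleftrightarrow> a = \<alpha> i"
    and aper: "\<forall>i\<ge>T. \<alpha> (i + n) = \<alpha> i" and acons: "\<forall>i. tgt (\<alpha> i) = src (\<alpha> (Suc i))"
    and adist: "distinct (map (\<lambda>j. src (\<alpha> (T + j))) [0..<n])"
  proof -
    have "\<exists>T n \<alpha>. 0 < n \<and> (\<forall>i\<ge>T. \<forall>a. X.dd i a \<noteq> 0 \<longleftrightarrow> a = \<alpha> i) \<and> (\<forall>i\<ge>T. \<alpha> (i + n) = \<alpha> i)
     \<and> (\<forall>i. tgt (\<alpha> i) = src (\<alpha> (Suc i))) \<and> distinct (map (\<lambda>j. src (\<alpha> (T + j))) [0..<n])"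
    proof (rule walk[OF gk])
      show "\<exists>a. X.dd i a \<noteq> 0" for i using X.dd_exists gen by blast
      show "src a = src b" if "X.dd i a \<noteq> 0" "X.dd i b \<noteq> 0" for i a b
        using X.dd_src[OF that(1)] X.dd_src[OF that(2)] X.ee_uniq by blast
      show "tgt a = src b" if "X.dd i a \<noteq> 0" "X.dd (Suc i) b \<noteq> 0" for i a b
        using X.dd_tgt[OF that(1)] X.dd_src[OF that(2)] X.ee_uniq by blast
    qed
    thus ?thesis using that by blast
  qed
  define N0 where "N0 = T * n"
  have N0T: "T \<le> N0" unfolding N0_def using n0 by simp
  define \<sigma> where "\<sigma> j = \<alpha> (N0 + j)" for j
  have sper: "\<sigma> (j + n) = \<sigma> j" for j unfolding \<sigma>_def using aper N0T by (simp add: add.assoc[symmetric])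
  have scons: "tgt (\<sigma> j) = src (\<sigma> (Suc j))" for j unfolding \<sigma>_def using acons by simp
  have seq: "\<sigma> i = \<alpha> i" if "i \<ge> N0" for i
  proof -
    have "\<alpha> (i + T * n) = \<alpha> i" using per_from[of T \<alpha> n i T] aper that N0T by simp
    thus ?thesis unfolding \<sigma>_def N0_def by (simp add: add.commute)
  qed
  interpret C: cyck src tgt \<sigma> n "0::'k" by unfold_locales (use n0 sper scons in auto)
  have simple: "simple_cycle src tgt C.v0 C.cyc"
  proof -
    have cg: "C.cyc = C.\<gamma> n" by (simp add: C.cyc_def C.\<gamma>_def)
    have "C.cyc \<noteq> []" using n0 by (simp add: C.cyc_def)
    moreover have "pathfrom src tgt C.v0 C.cyc" using C.gamma_path cg by simp
    moreover have "endv tgt C.v0 C.cyc = C.v0" using C.gamma_endv[of n] cg sper[of 0] by (simp add: C.v0_def)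
    moreover have "distinct (map src C.cyc)"
    proof -
      have "distinct (map (\<lambda>j. (\<lambda>i. src (\<alpha> i)) (T + (N0 - T) + j)) [0..<n])"
        by (rule window_distinct[OF n0]) (use aper adist in auto)
      hence "distinct (map (\<lambda>j. src (\<alpha> (N0 + j))) [0..<n])" using N0T by simp
      moreover have "map src C.cyc = map (\<lambda>j. src (\<alpha> (N0 + j))) [0..<n]" by (simp add: C.cyc_def \<sigma>_def)
      ultimately show ?thesis by simp
    qed
    ultimately show ?thesis unfolding simple_cycle_def by blast
  qed
  define bb where "bb k = foldl (\<lambda>y a. marr P a y) (xb N0) (map \<alpha> [N0..<N0 + k])" for k
  have bb_Suc: "bb (Suc k) = marr P (\<alpha> (N0 + k)) (bb k)" for k by (simp add: bb_def)
  have xbC: "xb i \<in> C" for i using xb G_C by blast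
  have bbc: "\<exists>c. c \<noteq> 0 \<and> bb k = sm c (xb (N0 + k))" for k
  proof (induction k)
    case 0 thus ?case using xbC by (intro exI[of _ 1]) (simp add: bb_def)
  next
    case (Suc k)
    then obtain c where c: "c \<noteq> 0" "bb k = sm c (xb (N0 + k))" by blast
    have d: "X.dd (N0 + k) (\<alpha> (N0 + k)) \<noteq> 0" using act N0T by simp
    have "bb (Suc k) = sm (c * X.dd (N0 + k) (\<alpha> (N0 + k))) (xb (N0 + Suc k))"
      unfolding bb_Suc c(2) using xbC by (simp add: arr_sm X.dd sm_sm)
    thus ?case using c d by (intro exI[of _ "c * X.dd (N0 + k) (\<alpha> (N0 + k))"]) simp
  qed
  define b2 where "b2 i = (if i < N0 then xb i else bb (i - N0))" for i
  have b2c: "\<exists>c. c \<noteq> 0 \<and> b2 i = sm c (xb i)" for i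
  proof (cases "i < N0")
    case True thus ?thesis using xbC by (intro exI[of _ 1]) (simp add: b2_def)
  next
    case False thus ?thesis using bbc[of "i - N0"] by (simp add: b2_def)
  qed
  have b2_Suc: "b2 (Suc i) = marr P (\<sigma> i) (b2 i)" if "i \<ge> N0" for i
  proof -
    have "Suc i - N0 = Suc (i - N0)" using that by simp
    hence "b2 (Suc i) = marr P (\<alpha> (N0 + (i - N0))) (bb (i - N0))" using that by (simp add: b2_def bb_Suc)
    thus ?thesis using that seq[OF that] by (simp add: b2_def)
  qed
  interpret Y: pb src tgt P b2
  proof
    fix i
    obtain c where c: "c \<noteq> 0" "b2 i = sm c (xb i)" using b2c by blast
    show "b2 i \<in> G i" using c xb sm_G by simp
    show "b2 i \<noteq> z" using c xb sm_eq_z[OF xbC] by metis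
    fix y assume "y \<in> G i"
    then obtain d where d: "y = sm d (xb i)" using xb by blast
    have "sm (d / c) (b2 i) = sm (d / c * c) (xb i)" unfolding c(2) by (rule sm_sm[OF xbC, symmetric])
    also have "d / c * c = d" using c by simp
    finally show "\<exists>c. y = sm c (b2 i)" using d by metis
  qed
  have Ydd: "Y.dd i a = (if a = \<sigma> i then 1 else 0)" if iN: "i \<ge> N0" for i a
  proof (cases "a = \<sigma> i")
    case True
    have "sm (Y.dd i a) (b2 (Suc i)) = sm 1 (b2 (Suc i))"
      using Y.dd[of a i] b2_Suc[OF iN] True Y.b_C by simp
    hence "Y.dd i a = 1" using sm_cancel[OF Y.b_C Y.b_nz] by blast
    thus ?thesis using True by simp
  next
    case False
    have "i \<ge> T" using iN N0T by simp
    hence "(X.dd i a \<noteq> 0) = (a = \<alpha> i)" using act by simp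
    hence "X.dd i a = 0" using seq[OF iN] False by simp
    obtain c where c: "b2 i = sm c (xb i)" using b2c by blast
    have "marr P a (b2 i) = z" using c xbC by (simp add: arr_sm X.dd \<open>X.dd i a = 0\<close>)
    hence "sm (Y.dd i a) (b2 (Suc i)) = z" using Y.dd by simp
    hence "Y.dd i a = 0" by (rule Y.sm_b_eq_z)
    thus ?thesis using False by simp
  qed
  have Yee: "Y.ee i w = (if w = src (\<sigma> i) then 1 else 0)" if iN: "i \<ge> N0" for i w
  proof -
    have e1: "Y.ee i (src (\<sigma> i)) = 1" using Y.dd_src[of i "\<sigma> i"] Ydd[OF iN] by simp
    show ?thesis using e1 Y.ee_other[OF e1, of w] by auto
  qed
  define S where "S = {x \<in> C. \<forall>i<N0. Y.kap x i = 0}"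
  define f where "f x = C.cs (C.emb (Y.kap x))" for x
  have embPC: "C.emb (Y.kap x) \<in> C.PC" if xc: "x \<in> C" for x
  proof -
    obtain N where "\<forall>i\<ge>N. Y.kap x i = 0" using Y.kap_fin[OF xc] by blast
    thus ?thesis by (intro C.emb_PC) auto
  qed
  have SC: "x \<in> S \<Longrightarrow> x \<in> C" for x unfolding S_def by simp
  have S0: "x \<in> S \<Longrightarrow> i < N0 \<Longrightarrow> Y.kap x i = 0" for x i unfolding S_def by simp
  have Sin: "x \<in> S \<longleftrightarrow> x \<in> C \<and> (\<forall>i<N0. Y.kap x i = 0)" for x by (simp add: S_def)
  have Sad: "ad x y \<in> S" if x: "x \<in> S" and y: "y \<in> S" for x y
  proof -
    have "Y.kap (ad x y) i = 0" if "i < N0" for i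
      using Y.kap_add[OF SC[OF x] SC[OF y]] S0[OF x that] S0[OF y that] by simp
    thus ?thesis using Sin SC x y by simp
  qed
  have Ssm: "sm c x \<in> S" if x: "x \<in> S" for x c
  proof -
    have "Y.kap (sm c x) i = 0" if "i < N0" for i
      using Y.kap_sm[OF SC[OF x]] S0[OF x that] by simp
    thus ?thesis using Sin SC x by simp
  qed
  have Sidem: "midem P w x \<in> S" if x: "x \<in> S" for x w
  proof -
    have "Y.kap (midem P w x) i = 0" if "i < N0" for i
      using Y.kap_idem[OF SC[OF x]] S0[OF x that] by simp
    thus ?thesis using Sin SC x by simp
  qed
  have Sarr: "marr P a x \<in> S" if x: "x \<in> S" for x a
  proof -
    have "Y.kap (marr P a x) i = 0" if i: "i < N0" for i
    proof (cases i)
      case 0 thus ?thesis using Y.kap_arr[OF SC[OF x]] by simp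
    next
      case (Suc j)
      hence "j < N0" using i by simp
      thus ?thesis using Y.kap_arr[OF SC[OF x]] S0[OF x] Suc by simp
    qed
    thus ?thesis using Sin SC x by simp
  qed
  have Sdec: "\<exists>N ms. (\<forall>i<N. ms i \<in> G i \<inter> S) \<and> x = lsum P ms [0..<N]" if x: "x \<in> S" for x
  proof -
    obtain N where N: "x = Y.LC (Y.kap x) N" using Y.kap_spec[OF SC[OF x]] by blast
    have "sm (Y.kap x i) (b2 i) \<in> G i \<inter> S" for i
    proof -
      have g: "sm (Y.kap x i) (b2 i) \<in> G i" using Y.b_G sm_G by blast
      have "Y.kap (sm (Y.kap x i) (b2 i)) j = 0" if "j < N0" for j
        using S0[OF x that] by (cases "j = i") (simp_all add: Y.kap_smb)
      thus ?thesis using g G_C Sin by blast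
    qed
    hence "\<forall>i<N. sm (Y.kap x i) (b2 i) \<in> G i \<inter> S" by blast
    moreover have "x = lsum P (\<lambda>i. sm (Y.kap x i) (b2 i)) [0..<N]" using N unfolding Y.LC_def .
    ultimately show ?thesis by (intro exI[of _ N] exI[of _ "\<lambda>i. sm (Y.kap x i) (b2 i)"]) simp
  qed
  have SsubC: "S \<subseteq> C" using SC by blast
  have Sz: "z \<in> S" using Sin by simp
  have h1: "gr_submod P S"
    unfolding gr_submod_def
  proof (intro conjI)
    show "S \<subseteq> C" by (rule SsubC)
    show "z \<in> S" by (rule Sz)
    show "\<forall>x\<in>S. \<forall>y\<in>S. ad x y \<in> S" using Sad by blast
    show "\<forall>c. \<forall>x\<in>S. sm c x \<in> S" using Ssm by blast
    show "\<forall>v. \<forall>x\<in>S. midem P v x \<in> S" using Sidem by blast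
    show "\<forall>a. \<forall>x\<in>S. marr P a x \<in> S" using Sarr by blast
    show "\<forall>x\<in>S. \<exists>N ms. (\<forall>i<N. ms i \<in> G i \<inter> S) \<and> x = lsum P ms [0..<N]" using Sdec by blast
  qed
  have h2: "quot_torsion src tgt P S"
    unfolding quot_torsion_def
  proof (intro ballI exI allI impI)
    fix x v p assume x: "x \<in> C" and p: "pathfrom src tgt v p \<and> N0 \<le> length p"
    show "path_act P v p x \<in> S" unfolding S_def using x p by (auto intro!: Y.kap_path_low)
  qed
  have h3: "\<forall>x\<in>S. f x \<in> mcarr C.OM"
    unfolding f_def C.OM_carr using embPC SC by blast
  have h4: "\<forall>x\<in>S. \<forall>y\<in>S. msub C.OM (f (madd P x y)) (madd C.OM (f x) (f y)) \<in> tors src tgt C.OM"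
  proof (intro ballI)
    fix x y assume x: "x \<in> S" and y: "y \<in> S"
    have e: "madd C.OM (f x) (f y) = C.cs (\<lambda>q. C.emb (Y.kap x) q + C.emb (Y.kap y) q)"
      unfolding f_def by (rule C.OM_add) (use embPC SC x y in auto)
    show "msub C.OM (f (madd P x y)) (madd C.OM (f x) (f y)) \<in> tors src tgt C.OM"
      unfolding e unfolding f_def
      by (rule C.msub_tors) (use embPC SC x y in \<open>auto simp: Y.kap_add\<close>)
  qed
  have h5: "\<forall>c. \<forall>x\<in>S. msub C.OM (f (msmul P c x)) (msmul C.OM c (f x)) \<in> tors src tgt C.OM"
  proof (intro ballI allI)
    fix c x assume x: "x \<in> S"
    have e: "msmul C.OM c (f x) = C.cs (\<lambda>q. c * C.emb (Y.kap x) q)"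
      unfolding f_def by (rule C.OM_sm) (use embPC SC x in auto)
    show "msub C.OM (f (msmul P c x)) (msmul C.OM c (f x)) \<in> tors src tgt C.OM"
      unfolding e unfolding f_def
      by (rule C.msub_tors) (use embPC SC x in \<open>auto simp: Y.kap_sm\<close>)
  qed
  have h6: "\<forall>w. \<forall>x\<in>S. msub C.OM (f (midem P w x)) (midem C.OM w (f x)) \<in> tors src tgt C.OM"
  proof (intro ballI allI)
    fix w x assume x: "x \<in> S"
    have e: "midem C.OM w (f x) = C.cs (midem C.PM w (C.emb (Y.kap x)))"
      unfolding f_def by (rule C.OM_idem) (use embPC SC x in auto)
    have th: "C.emb (Y.kap (midem P w x)) (C.\<gamma> j) = midem C.PM w (C.emb (Y.kap x)) (C.\<gamma> j)" for j
    proof (cases "j < N0")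
      case True thus ?thesis using S0[OF x True] SC[OF x] by (simp add: Y.kap_idem C.th_idem)
    next
      case False thus ?thesis using SC[OF x] Yee[of j w] by (simp add: Y.kap_idem C.th_idem)
    qed
    show "msub C.OM (f (midem P w x)) (midem C.OM w (f x)) \<in> tors src tgt C.OM"
      unfolding e unfolding f_def
      by (rule C.msub_tors) (use embPC SC x th in auto)
  qed
  have h7: "\<forall>a. \<forall>x\<in>S. msub C.OM (f (marr P a x)) (marr C.OM a (f x)) \<in> tors src tgt C.OM"
  proof (intro ballI allI)
    fix a x assume x: "x \<in> S"
    have e: "marr C.OM a (f x) = C.cs (marr C.PM a (C.emb (Y.kap x)))"
      unfolding f_def by (rule C.OM_arr) (use embPC SC x in auto)
    have th: "C.emb (Y.kap (marr P a x)) (C.\<gamma> j) = marr C.PM a (C.emb (Y.kap x)) (C.\<gamma> j)" for j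
    proof (cases j)
      case 0 thus ?thesis using SC[OF x] by (simp add: Y.kap_arr C.th_arr)
    next
      case (Suc i)
      show ?thesis
      proof (cases "i < N0")
        case True thus ?thesis using S0[OF x True] SC[OF x] Suc by (simp add: Y.kap_arr C.th_arr)
      next
        case False thus ?thesis using SC[OF x] Ydd[of i a] Suc by (simp add: Y.kap_arr C.th_arr)
      qed
    qed
    show "msub C.OM (f (marr P a x)) (marr C.OM a (f x)) \<in> tors src tgt C.OM"
      unfolding e unfolding f_def
      by (rule C.msub_tors) (use embPC SC x th in auto)
  qed
  have h8: "\<forall>i. \<forall>x\<in>S \<inter> mgr P i. \<exists>y\<in>mgr C.OM i. msub C.OM (f x) y \<in> tors src tgt C.OM"
  proof (intro allI ballI)
    fix i x assume x: "x \<in> S \<inter> G i"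
    obtain N where N: "\<forall>j\<ge>N. Y.kap x j = 0" using Y.kap_fin SC x by blast
    have "C.emb (Y.kap x) \<in> mgr C.PM i"
      by (rule C.emb_gr[of N]) (use N Y.kap_G x in auto)
    hence "f x \<in> mgr C.OM i" unfolding f_def C.OM_gr by blast
    moreover have "msub C.OM (f x) (f x) \<in> tors src tgt C.OM"
      unfolding f_def by (rule C.msub_tors) (use embPC SC x in auto)
    ultimately show "\<exists>y\<in>mgr C.OM i. msub C.OM (f x) y \<in> tors src tgt C.OM" by blast
  qed
  have h9: "\<forall>x\<in>S. f x \<in> tors src tgt C.OM \<longrightarrow> x \<in> tors src tgt P"
  proof (intro ballI impI)
    fix x assume x: "x \<in> S" and ft: "f x \<in> tors src tgt C.OM"
    then obtain m where m: "ann_ge src tgt C.OM m (f x)" unfolding tors_def by blast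
    have k0: "Y.kap x j = 0" for j
    proof (rule ccontr)
      assume nz: "Y.kap x j \<noteq> 0"
      define p where "p = map \<sigma> [j..<j + m]"
      have pp: "pathfrom src tgt (src (\<sigma> j)) p" using C.seg_path[of j "j + m"] unfolding p_def by simp
      have "path_act C.OM (src (\<sigma> j)) p (f x) = mzero C.OM"
        using m pp unfolding ann_ge_def p_def by simp
      hence "C.cs (path_act C.PM (src (\<sigma> j)) p (C.emb (Y.kap x))) = C.cs (\<lambda>q. 0)"
        unfolding f_def C.OM_zero using C.OM_path embPC SC x by simp
      hence "path_act C.PM (src (\<sigma> j)) p (C.emb (Y.kap x)) (C.\<gamma> (j + m)) = 0"
        using C.cs_eq_iff C.PM_path_in embPC SC x C.PC_zero by blast
      moreover have "path_act C.PM (src (\<sigma> j)) p (C.emb (Y.kap x)) (C.\<gamma> (j + m)) = Y.kap x j"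
        unfolding p_def by (simp add: C.PM_path_cycle)
      ultimately show False using nz by simp
    qed
    have "x = z" using Y.kap_eq_z SC x k0 by blast
    thus "x \<in> tors src tgt P" unfolding tors_def ann_ge_def by auto
  qed
  have h10: "\<forall>y\<in>mcarr C.OM. \<exists>n. \<forall>v p. pathfrom src tgt v p \<and> n \<le> length p \<longrightarrow>
            (\<exists>x\<in>S. msub C.OM (path_act C.OM v p y) (f x) \<in> tors src tgt C.OM)"
  proof (intro ballI exI allI impI)
    fix Yv v p assume Yv: "Yv \<in> mcarr C.OM" and p: "pathfrom src tgt v p \<and> N0 \<le> length p"
    obtain c where c: "c \<in> C.PC" "Yv = C.cs c" using Yv C.OM_carr by auto
    define c' where "c' = path_act C.PM v p c"
    have c'P: "c' \<in> C.PC" unfolding c'_def using C.PM_path_in c by blast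
    have e: "path_act C.OM v p Yv = C.cs c'" unfolding c'_def c(2) using C.OM_path c by blast
    obtain N where N: "\<forall>j\<ge>N. c' (C.\<gamma> j) = 0" using C.th_fin[OF c'P] by blast
    define x where "x = Y.LC (\<lambda>j. c' (C.\<gamma> j)) N"
    have kx: "Y.kap x = (\<lambda>j. c' (C.\<gamma> j))" unfolding x_def by (rule Y.kap_LC) (use N in auto)
    have low: "c' (C.\<gamma> j) = 0" if "j < length p" for j
    proof (rule ccontr)
      assume "c' (C.\<gamma> j) \<noteq> 0"
      hence "length p \<le> length (C.\<gamma> j)" unfolding c'_def by (rule C.PM_path_supp)
      thus False using that by simp
    qed
    have xS: "x \<in> S" unfolding S_def using kx low p x_def by auto
    have "msub C.OM (C.cs c') (f x) \<in> tors src tgt C.OM"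
      unfolding f_def kx by (rule C.msub_tors) (use c'P N in \<open>auto intro: C.emb_PC\<close>)
    thus "\<exists>x\<in>S. msub C.OM (path_act C.OM v p Yv) (f x) \<in> tors src tgt C.OM" using xS e by auto
  qed
  have iso: "qgr_iso src tgt P C.OM"
    unfolding qgr_iso_def
    using h1 h2 h3 h4 h5 h6 h7 h8 h9 h10 by (intro exI[of _ S] exI[of _ f] conjI) assumption+
  show ?thesis using simple iso by blast
qed


end
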